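(* For every $k\ge1$ and every $l\in\{1,\dots,k+1\}$, \[i(\alpha)(\mathcal{F}_{k,l})\subset\mathcal{F}_{k-1,l-1}\qquad\text{and}\qquad X(\mathcal{F}_{k-1,l-1})\subset\mathcal{F}_{k,l}.\]
   Context: Let $n\ge1$, $M=\mathbb{R}^{2n+1}$ with coordinates $(q^1,\dots,q^n,p^1,\dots,p^n,t)$. For $\mu\in\mathbb{R}$, $\mathcal{S}^k_\mu$ denotes the space of smooth functions $S(x,\xi)$ on $M\times\mathbb{R}^{2n+1}$ homogeneous polynomial of degree $k$ in $\xi=(\xi_{q^1},\dots,\xi_{q^n},\xi_{p^1},\dots,\xi_{p^n},\xi_t)$. Fix $\delta\in\mathbb{R}$ and set $R^k=\mathcal{S}^k_{\delta+\frac{k}{n+1}}$ for $k\ge0$, $R^{j}=0$ for $j<0$. Let $E_s=\sum_i(p^i\partial_{p^i}+q^i\partial_{q^i})$, $\langle E_s,\xi\rangle=\sum_i(p^i\xi_{p^i}+q^i\xi_{q^i})$, $D(S)=\sum_i(\xi_{q^i}\partial_{p^i}S-\xi_{p^i}\partial_{q^i}S)+\xi_tE_s(S)-\langle E_s,\xi\rangle\partial_tS$. Operators: $i(\alpha):R^k\to R^{k-1}$, $i(\alpha)(S)=\frac12\big(\sum_i(p^i\partial_{\xi_{q^i}}S-q^i\partial_{\xi_{p^i}}S)-\partial_{\xi_t}S\big)$; $X:R^k\to R^{k+1}$, $X(S)=D(S)+(2(n+1)\delta+k)\xi_tS$. For $k\ge0$, $l\ge0$, $\mathcal{F}_{k,l}=R^k\cap\ker\big(i(\alpha)^l\big)$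 (so $\mathcal{F}_{k,0}=0$ and $\mathcal{F}_{k,k+1}=R^k$). *)

theory Defs
  imports "HOL-Analysis.Analysis"
begin

text \<open>A point of \<open>M = R^(2n+1)\<close> (or a covector \<open>\<xi>\<close>) is a triple (q, p, t)
  with q, p in \<open>real^'n\<close>, t real; here n = CARD('n).\<close>

type_synonym 'n pt = "(real^'n) \<times> (real^'n) \<times> real"

type_synonym 'n sym = "('n pt \<times> 'n pt) \<Rightarrow> real"

definition qc :: "'n pt \<Rightarrow> 'n::finite \<Rightarrow> real" where "qc x i = fst x $ i"
definition pc :: "'n pt \<Rightarrow> 'n::finite \<Rightarrow> real" where "pc x i = fst (snd x) $ i"
definition tc :: "'n pt \<Rightarrow> real" where "tc x = snd (snd x)"

definition pd :: "'a::real_normed_vector \<Rightarrow> ('a \<Rightarrow> real) \<Rightarrow> 'a \<Rightarrow> real" where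
  "pd v f z = deriv (\<lambda>s. f (z + s *\<^sub>R v)) 0"

definition smooth :: "('a::euclidean_space \<Rightarrow> real) \<Rightarrow> bool" where
  "smooth f \<longleftrightarrow> (\<forall>vs. set vs \<subseteq> Basis \<longrightarrow>
      continuous_on UNIV (foldr pd vs f) \<and>
      (\<forall>v\<in>Basis. \<forall>z. (\<lambda>s. foldr pd vs f (z + s *\<^sub>R v)) differentiable (at 0)))"

definition d_q :: "'n::finite \<Rightarrow> 'n pt \<times> 'n pt" where "d_q i = ((axis i 1, 0, 0), 0)"
definition d_p :: "'n::finite \<Rightarrow> 'n pt \<times> 'n pt" where "d_p i = ((0, axis i 1, 0), 0)"
definition d_t :: "'n::finite pt \<times> 'n pt" where "d_t = ((0, 0, 1), 0)"
definition d_xiq :: "'n::finite \<Rightarrow> 'n pt \<times> 'n pt" where "d_xiq i = (0, (axis i 1, 0, 0))"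
definition d_xip :: "'n::finite \<Rightarrow> 'n pt \<times> 'n pt" where "d_xip i = (0, (0, axis i 1, 0))"
definition d_xit :: "'n::finite pt \<times> 'n pt" where "d_xit = (0, (0, 0, 1))"

type_synonym 'n mindex = "('n \<Rightarrow> nat) \<times> ('n \<Rightarrow> nat) \<times> nat"

definition mdeg :: "'n::finite mindex \<Rightarrow> nat" where
  "mdeg a = (\<Sum>i\<in>UNIV. fst a i) + (\<Sum>i\<in>UNIV. fst (snd a) i) + snd (snd a)"

definition monom_xi :: "'n::finite mindex \<Rightarrow> 'n pt \<Rightarrow> real" where
  "monom_xi a \<xi> = (\<Prod>i\<in>UNIV. qc \<xi> i ^ fst a i) * (\<Prod>i\<in>UNIV. pc \<xi> i ^ fst (snd a) i)
                   * tc \<xi> ^ snd (snd a)"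

definition hom_poly_xi :: "nat \<Rightarrow> ('n::finite) sym \<Rightarrow> bool" where
  "hom_poly_xi k S \<longleftrightarrow> (\<forall>x. \<exists>c :: 'n mindex \<Rightarrow> real.
      \<forall>\<xi>. S (x, \<xi>) = (\<Sum>a\<in>{a. mdeg a = k}. c a * monom_xi a \<xi>))"

text \<open>The space \<open>S^k_\<mu>\<close>; as a space of functions it does not depend on the
  weight \<mu> (the weight only enters the module structure).\<close>
definition Sspace :: "nat \<Rightarrow> real \<Rightarrow> ('n::finite) sym set" where
  "Sspace k \<mu> = {S. smooth S \<and> hom_poly_xi k S}"

definition Rsp :: "real \<Rightarrow> nat \<Rightarrow> ('n::finite) sym set" where
  "Rsp \<delta> k = Sspace k (\<delta> + real k / real (CARD('n) + 1))"

definition Es :: "('n::finite) sym \<Rightarrow> 'n sym" where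
  "Es S z = (\<Sum>i\<in>UNIV. pc (fst z) i * pd (d_p i) S z + qc (fst z) i * pd (d_q i) S z)"

definition Es_xi :: "('n::finite) pt \<times> 'n pt \<Rightarrow> real" where
  "Es_xi z = (\<Sum>i\<in>UNIV. pc (fst z) i * pc (snd z) i + qc (fst z) i * qc (snd z) i)"

definition Dop :: "('n::finite) sym \<Rightarrow> 'n sym" where
  "Dop S z = (\<Sum>i\<in>UNIV. qc (snd z) i * pd (d_p i) S z - pc (snd z) i * pd (d_q i) S z)
             + tc (snd z) * Es S z - Es_xi z * pd d_t S z"

definition i_alpha :: "('n::finite) sym \<Rightarrow> 'n sym" where
  "i_alpha S z = (1/2) * ((\<Sum>i\<in>UNIV. pc (fst z) i * pd (d_xiq i) S z
                                      - qc (fst z) i * pd (d_xip i) S z) - pd d_xit S z)"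

text \<open>X on \<open>R^k\<close> (k = degree of the argument).\<close>
definition Xop :: "real \<Rightarrow> nat \<Rightarrow> ('n::finite) sym \<Rightarrow> 'n sym" where
  "Xop \<delta> k S z = Dop S z + (2 * real (CARD('n) + 1) * \<delta> + real k) * tc (snd z) * S z"

definition Fsp :: "real \<Rightarrow> nat \<Rightarrow> nat \<Rightarrow> ('n::finite) sym set" where
  "Fsp \<delta> k l = Rsp \<delta> k \<inter> {S. (i_alpha ^^ l) S = (\<lambda>_. 0)}"

end

theory Submission
  imports Defs
begin


definition dfa :: "'a::real_normed_vector \<Rightarrow> ('a \<Rightarrow> real) \<Rightarrow> 'a \<Rightarrow> bool" where
  "dfa v f z \<longleftrightarrow> (\<lambda>s. f (z + s *\<^sub>R v)) differentiable (at 0)"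

lemma pd_DERIV: "dfa v f z \<Longrightarrow> ((\<lambda>s. f (z + s *\<^sub>R v)) has_real_derivative pd v f z) (at 0)"
  unfolding dfa_def pd_def by (simp add: DERIV_deriv_iff_real_differentiable)

lemma dfa_I: "((\<lambda>s. f (z + s *\<^sub>R v)) has_real_derivative D) (at 0) \<Longrightarrow> dfa v f z"
  unfolding dfa_def using real_differentiable_def by blast

lemma pd_eqI: "((\<lambda>s. f (z + s *\<^sub>R v)) has_real_derivative D) (at 0) \<Longrightarrow> pd v f z = D"
  unfolding pd_def by (rule DERIV_imp_deriv)

lemma pd_add: "dfa v f z \<Longrightarrow> dfa v g z \<Longrightarrow> pd v (\<lambda>z. f z + g z) z = pd v f z + pd v g z"
  by (rule pd_eqI, intro DERIV_add pd_DERIV)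
lemma dfa_add: assumes "dfa v f z" "dfa v g z" shows "dfa v (\<lambda>z. f z + g z) z"
  using dfa_I[OF DERIV_add[OF pd_DERIV[OF assms(1)] pd_DERIV[OF assms(2)]]] by simp
lemma pd_diff: "dfa v f z \<Longrightarrow> dfa v g z \<Longrightarrow> pd v (\<lambda>z. f z - g z) z = pd v f z - pd v g z"
  by (rule pd_eqI, intro DERIV_diff pd_DERIV)
lemma dfa_diff: assumes "dfa v f z" "dfa v g z" shows "dfa v (\<lambda>z. f z - g z) z"
  using dfa_I[OF DERIV_diff[OF pd_DERIV[OF assms(1)] pd_DERIV[OF assms(2)]]] by simp
lemma pd_mult: "dfa v f z \<Longrightarrow> dfa v g z \<Longrightarrow> pd v (\<lambda>z. f z * g z) z = pd v f z * g z + f z * pd v g z"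
  by (rule pd_eqI, rule DERIV_mult[THEN DERIV_cong], (rule pd_DERIV, assumption)+, simp)
lemma dfa_mult: assumes "dfa v f z" "dfa v g z" shows "dfa v (\<lambda>z. f z * g z) z"
  using dfa_I[OF DERIV_mult[OF pd_DERIV[OF assms(1)] pd_DERIV[OF assms(2)]]] by simp
lemma pd_const: "pd v (\<lambda>z. c) z = 0"
  by (rule pd_eqI, simp)
lemma dfa_const: "dfa v (\<lambda>z. c) z"
  by (rule dfa_I, rule DERIV_const)
lemma pd_inner: "pd v (\<lambda>z. z \<bullet> w) z = v \<bullet> w"
  by (rule pd_eqI, auto intro!: derivative_eq_intros simp: inner_add_left)
lemma dfa_inner: "dfa v (\<lambda>z. z \<bullet> w) z"
  by (rule dfa_I, auto intro!: derivative_eq_intros simp: inner_add_left)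
lemma pd_sum: "finite A \<Longrightarrow> (\<And>j. j \<in> A \<Longrightarrow> dfa v (F j) z) \<Longrightarrow> pd v (\<lambda>z. \<Sum>j\<in>A. F j z) z = (\<Sum>j\<in>A. pd v (F j) z)"
  by (rule pd_eqI, rule DERIV_sum, rule pd_DERIV, auto)
lemma dfa_sum: "finite A \<Longrightarrow> (\<And>j. j \<in> A \<Longrightarrow> dfa v (F j) z) \<Longrightarrow> dfa v (\<lambda>z. \<Sum>j\<in>A. F j z) z"
  by (rule dfa_I, rule DERIV_sum, rule pd_DERIV, auto)

lemma smoothD_cont: "smooth f \<Longrightarrow> continuous_on UNIV f"
  unfolding smooth_def by (metis empty_subsetI foldr.simps(1) id_apply list.set(1))
lemma smooth_dfa: "smooth f \<Longrightarrow> v \<in> Basis \<Longrightarrow> dfa v f z"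
  unfolding smooth_def dfa_def by (metis empty_subsetI foldr.simps(1) id_apply list.set(1))
lemma smooth_pd: "smooth f \<Longrightarrow> v \<in> Basis \<Longrightarrow> smooth (pd v f)"
  unfolding smooth_def
proof (intro allI impI)
  fix vs :: "'a list"
  assume a: "\<forall>vs. set vs \<subseteq> Basis \<longrightarrow> continuous_on UNIV (foldr pd vs f) \<and>
      (\<forall>v\<in>Basis. \<forall>z. (\<lambda>s. foldr pd vs f (z + s *\<^sub>R v)) differentiable at 0)"
    and v: "v \<in> Basis" and vs: "set vs \<subseteq> Basis"
  have s: "set (vs @ [v]) \<subseteq> Basis" using v vs by auto
  from a[rule_format, OF s] show "continuous_on UNIV (foldr pd vs (pd v f)) \<and>
      (\<forall>u\<in>Basis. \<forall>z. (\<lambda>s. foldr pd vs (pd v f) (z + s *\<^sub>R u)) differentiable at 0)"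
    by simp
qed

lemma smooth_coinduct:
  assumes "Q f"
    and "\<And>g. Q g \<Longrightarrow> continuous_on UNIV g"
    and "\<And>g v z. Q g \<Longrightarrow> v \<in> Basis \<Longrightarrow> dfa v g z"
    and "\<And>g v. Q g \<Longrightarrow> v \<in> Basis \<Longrightarrow> Q (pd v g)"
  shows "smooth f"
  unfolding smooth_def
proof (intro allI impI)
  fix vs :: "'a list" assume vs: "set vs \<subseteq> Basis"
  have "Q (foldr pd vs f)" using vs by (induction vs) (auto intro: assms)
  then show "continuous_on UNIV (foldr pd vs f) \<and>
      (\<forall>v\<in>Basis. \<forall>z. (\<lambda>s. foldr pd vs f (z + s *\<^sub>R v)) differentiable at 0)"
    using assms(2,3) unfolding dfa_def by blast
qed

lemma smooth_lin: "smooth (\<lambda>z. z \<bullet> w + c)"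
proof (rule smooth_coinduct[where Q="\<lambda>g. \<exists>w c. g = (\<lambda>z. z \<bullet> w + c)"])
  fix g v assume "\<exists>w c. g = (\<lambda>z. z \<bullet> w + c)"
  then obtain w c where g: "g = (\<lambda>z. z \<bullet> w + c)" by blast
  have "pd v g = (\<lambda>z. z \<bullet> 0 + v \<bullet> w)"
    unfolding g by (rule ext, rule pd_eqI, auto intro!: derivative_eq_intros simp: inner_add_left)
  then show "\<exists>w c. pd v g = (\<lambda>z. z \<bullet> w + c)" by blast
qed (auto intro!: continuous_intros dfa_add dfa_inner dfa_const)

lemma smooth_const: "smooth (\<lambda>z. c)"
  using smooth_lin[of 0 c] by simp
lemma smooth_inner: "smooth (\<lambda>z. z \<bullet> w)"
  using smooth_lin[of w 0] by simp

definition SP :: "(('a \<Rightarrow> real) \<times> ('a \<Rightarrow> real)) list \<Rightarrow> 'a \<Rightarrow> real" where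
  "SP L z = sum_list (map (\<lambda>(f,g). f z * g z) L)"

lemma SP_facts:
  fixes L :: "(('a::euclidean_space \<Rightarrow> real) \<times> ('a \<Rightarrow> real)) list" and v z :: 'a
  assumes "\<forall>(f,g)\<in>set L. smooth f \<and> smooth g" and v: "v \<in> Basis"
  shows "continuous_on UNIV (SP L) \<and> dfa v (SP L) z \<and>
     pd v (SP L) z = SP (concat (map (\<lambda>(f,g). [(pd v f, g), (f, pd v g)]) L)) z"
  using assms(1)
proof (induction L)
  case Nil
  then show ?case by (simp add: SP_def dfa_const pd_const)
next
  case (Cons a L)
  obtain f g where a: "a = (f,g)" by force
  have sf: "smooth f" "smooth g" using Cons.prems a by auto
  have e: "SP (a # L) = (\<lambda>z. f z * g z + SP L z)" by (rule ext, simp add: SP_def a)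
  have IH: "continuous_on UNIV (SP L)" "dfa v (SP L) z"
    "pd v (SP L) z = SP (concat (map (\<lambda>(f,g). [(pd v f, g), (f, pd v g)]) L)) z"
    using Cons by auto
  have d: "dfa v f z" "dfa v g z" using sf v smooth_dfa by auto
  have c: "continuous_on UNIV f" "continuous_on UNIV g" using sf smoothD_cont by auto
  have "continuous_on UNIV (\<lambda>z. f z * g z + SP L z)"
    using IH(1) c by (intro continuous_intros) auto
  moreover have "dfa v (\<lambda>z. f z * g z + SP L z) z"
    using IH d by (intro dfa_add dfa_mult) auto
  moreover have "pd v (\<lambda>z. f z * g z + SP L z) z = SP (concat (map (\<lambda>(f,g). [(pd v f, g), (f, pd v g)]) (a#L))) z"
    apply (simp only: pd_add[OF dfa_mult[OF d] IH(2)] pd_mult[OF d] IH(3))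
    by (simp add: SP_def a)
  ultimately show ?case unfolding e by blast
qed

lemma smooth_SP:
  fixes L :: "(('a::euclidean_space \<Rightarrow> real) \<times> ('a \<Rightarrow> real)) list"
  shows "\<forall>(f,g)\<in>set L. smooth f \<and> smooth g \<Longrightarrow> smooth (SP L)"
proof (rule smooth_coinduct[where Q="\<lambda>h. \<exists>L. (\<forall>(f,g)\<in>set L. smooth f \<and> smooth g) \<and> h = SP L"])
  fix h :: "'a \<Rightarrow> real" and v :: 'a assume "\<exists>L. (\<forall>(f,g)\<in>set L. smooth f \<and> smooth g) \<and> h = SP L" "v \<in> Basis"
  then obtain L where L: "\<forall>(f,g)\<in>set L. smooth f \<and> smooth g" "h = SP L" "v \<in> Basis" by blast
  let ?L = "concat (map (\<lambda>(f,g). [(pd v f, g), (f, pd v g)]) L)"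
  have "pd v h = SP ?L" using SP_facts[OF L(1) L(3)] L(2) by auto
  moreover have "\<forall>(f,g)\<in>set ?L. smooth f \<and> smooth g" using L by (auto intro: smooth_pd)
  ultimately show "\<exists>L. (\<forall>(f,g)\<in>set L. smooth f \<and> smooth g) \<and> pd v h = SP L" by blast
next
  fix h :: "'a \<Rightarrow> real" assume "\<exists>L. (\<forall>(f,g)\<in>set L. smooth f \<and> smooth g) \<and> h = SP L"
  then show "continuous_on UNIV h" using SP_facts[OF _ SOME_Basis] by blast
next
  fix h :: "'a \<Rightarrow> real" and v z :: 'a assume "\<exists>L. (\<forall>(f,g)\<in>set L. smooth f \<and> smooth g) \<and> h = SP L" "v \<in> Basis"
  then show "dfa v h z" using SP_facts by metis
qed auto

lemma smooth_mult: "smooth f \<Longrightarrow> smooth g \<Longrightarrow> smooth (\<lambda>z. f z * g z)"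
  using smooth_SP[of "[(f,g)]"] by (simp add: SP_def[abs_def])
lemma smooth_add: "smooth f \<Longrightarrow> smooth g \<Longrightarrow> smooth (\<lambda>z. f z + g z)"
  using smooth_SP[of "[(f,\<lambda>z. 1),(g,\<lambda>z. 1)]"] smooth_const by (simp add: SP_def[abs_def] smooth_const)
lemma smooth_diff: "smooth f \<Longrightarrow> smooth g \<Longrightarrow> smooth (\<lambda>z. f z - g z)"
  using smooth_SP[of "[(f,\<lambda>z. 1),(g,\<lambda>z. -1)]"] smooth_const by (simp add: SP_def[abs_def] smooth_const)
lemma smooth_sum: "finite A \<Longrightarrow> (\<And>j. j \<in> A \<Longrightarrow> smooth (F j)) \<Longrightarrow> smooth (\<lambda>z. \<Sum>j\<in>A. F j z)"
  by (induction A rule: finite_induct) (auto simp: smooth_const smooth_add)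



definition lin :: "('b \<Rightarrow> real) set \<Rightarrow> ('b \<Rightarrow> real) \<Rightarrow> bool" where
  "lin F h \<longleftrightarrow> (\<exists>L. set (map snd L) \<subseteq> F \<and> h = (\<lambda>x. sum_list (map (\<lambda>(c,f). c * f x) L)))"

lemma lin_induct[consumes 1, case_names zero step]:
  assumes "lin F h" "P (\<lambda>x. 0)"
    "\<And>c f g. f \<in> F \<Longrightarrow> lin F g \<Longrightarrow> P g \<Longrightarrow> P (\<lambda>x. c * f x + g x)"
  shows "P h"
proof -
  obtain L where L: "set (map snd L) \<subseteq> F" "h = (\<lambda>x. sum_list (map (\<lambda>(c,f). c * f x) L))"
    using assms(1) unfolding lin_def by blast
  have "set (map snd L) \<subseteq> F \<Longrightarrow> lin F (\<lambda>x. sum_list (map (\<lambda>(c,f). c * f x) L)) \<and>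
     P (\<lambda>x. sum_list (map (\<lambda>(c,f). c * f x) L))"
  proof (induction L)
    case Nil
    then show ?case using assms(2) by (auto simp: lin_def intro: exI[of _ "[]"])
  next
    case (Cons a L)
    obtain c f where a: "a = (c,f)" by force
    have f: "f \<in> F" using Cons.prems a by auto
    have IH: "lin F (\<lambda>x. sum_list (map (\<lambda>(c,f). c * f x) L))" "P (\<lambda>x. sum_list (map (\<lambda>(c,f). c * f x) L))"
      using Cons by auto
    have "lin F (\<lambda>x. sum_list (map (\<lambda>(c,f). c * f x) (a#L)))"
      unfolding lin_def using Cons.prems by blast
    moreover have "P (\<lambda>x. sum_list (map (\<lambda>(c,f). c * f x) (a#L)))"
      using assms(3)[OF f IH(1) IH(2), of c] by (simp add: a)
    ultimately show ?case by blast
  qed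
  then show ?thesis using L by blast
qed

lemma lin_zero: "lin F (\<lambda>x. 0)"
  unfolding lin_def by (rule exI[of _ "[]"]) auto

lemma lin_base: "f \<in> F \<Longrightarrow> lin F f"
  unfolding lin_def by (rule exI[of _ "[(1,f)]"]) auto

lemma lin_add: "lin F f \<Longrightarrow> lin F g \<Longrightarrow> lin F (\<lambda>x. f x + g x)"
proof -
  assume "lin F f" "lin F g"
  then obtain L1 L2 where "set (map snd L1) \<subseteq> F" "f = (\<lambda>x. sum_list (map (\<lambda>(c,f). c * f x) L1))"
    "set (map snd L2) \<subseteq> F" "g = (\<lambda>x. sum_list (map (\<lambda>(c,f). c * f x) L2))"
    unfolding lin_def by blast
  then show ?thesis unfolding lin_def by (intro exI[of _ "L1 @ L2"]) auto
qed

lemma lin_base_scale: "f \<in> F \<Longrightarrow> lin F (\<lambda>x. c * f x)"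
  unfolding lin_def by (rule exI[of _ "[(c,f)]"]) auto

lemma lin_scale: "lin F f \<Longrightarrow> lin F (\<lambda>x. a * f x)"
proof (induction rule: lin_induct)
  case zero
  then show ?case by (simp add: lin_zero)
next
  case (step c f g)
  have "lin F (\<lambda>x. (a * c) * f x + a * g x)"
    using lin_add[OF lin_base_scale[OF step(1)] step(3)] .
  then show ?case by (simp add: algebra_simps)
qed

lemma lin_neg: "lin F f \<Longrightarrow> lin F (\<lambda>x. - f x)"
  using lin_scale[of F f "-1"] by simp

lemma lin_diff: "lin F f \<Longrightarrow> lin F g \<Longrightarrow> lin F (\<lambda>x. f x - g x)"
  using lin_add[OF _ lin_neg, of F f g] by simp

lemma lin_sum: "finite A \<Longrightarrow> (\<And>j. j \<in> A \<Longrightarrow> lin F (G j)) \<Longrightarrow> lin F (\<lambda>x. \<Sum>j\<in>A. G j x)"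
  by (induction A rule: finite_induct) (auto simp: lin_zero lin_add)

lemma lin_mono: "lin F f \<Longrightarrow> F \<subseteq> G \<Longrightarrow> lin G f"
  unfolding lin_def by blast

lemma lin_insert_decomp:
  assumes "lin (insert f F) h"
  shows "\<exists>c h0. lin F h0 \<and> h = (\<lambda>x. c * f x + h0 x)"
  using assms
proof (induction rule: lin_induct)
  case zero
  then show ?case by (intro exI[of _ 0] exI[of _ "\<lambda>x. 0"]) (auto simp: lin_zero)
next
  case (step c' f' g)
  then obtain c h0 where h0: "lin F h0" "g = (\<lambda>x. c * f x + h0 x)" by blast
  show ?case
  proof (cases "f' = f")
    case True
    then show ?thesis using h0
      by (intro exI[of _ "c' + c"] exI[of _ h0]) (auto simp: algebra_simps)
  next
    case False
    then have "f' \<in> F" using step by auto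
    then have "lin F (\<lambda>x. c' * f' x + h0 x)" using h0 by (intro lin_add lin_base_scale)
    then show ?thesis using h0
      by (intro exI[of _ c] exI[of _ "\<lambda>x. c' * f' x + h0 x"]) (auto simp: algebra_simps)
  qed
qed

lemma lin_empty: "lin {} h \<Longrightarrow> h = (\<lambda>x. 0)"
  by (induction rule: lin_induct) auto

lemma lagrange:
  fixes F :: "('b \<Rightarrow> real) set"
  assumes "finite F"
  shows "\<exists>P g. finite P \<and> (\<forall>p\<in>P. lin F (g p)) \<and>
     (\<forall>p\<in>P. \<forall>p'\<in>P. g p p' = (if p = p' then 1 else 0)) \<and>
     (\<forall>h. lin F h \<longrightarrow> (\<forall>x. h x = (\<Sum>p\<in>P. h p * g p x)))"
  using assms
proof (induction F rule: finite_induct)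
  case empty
  show ?case
  proof (intro exI[of _ "{}"] exI[of _ "\<lambda>p x. 0"] conjI allI impI)
    fix h :: "'b \<Rightarrow> real" and x assume "lin {} h"
    then show "h x = (\<Sum>p\<in>{}. h p * 0)" by (drule_tac lin_empty) simp
  qed auto
next
  case (insert f F)
  from insert.IH obtain P g where P: "finite P" "\<forall>p\<in>P. lin F (g p)"
     "\<forall>p\<in>P. \<forall>p'\<in>P. g p p' = (if p = p' then 1 else 0)"
     "\<forall>h. lin F h \<longrightarrow> (\<forall>x. h x = (\<Sum>p\<in>P. h p * g p x))" by blast
  have mono: "lin F h \<Longrightarrow> lin (insert f F) h" for h by (erule lin_mono) auto
  define r where "r x = f x - (\<Sum>p\<in>P. f p * g p x)" for x
  have r_lin: "lin (insert f F) r"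
    unfolding r_def[abs_def]
  proof (rule lin_diff[OF lin_base])
    show "lin (insert f F) (\<lambda>x. \<Sum>p\<in>P. f p * g p x)"
      using P by (intro lin_sum lin_scale mono) auto
  qed auto
  have r_P: "r p' = 0" if "p' \<in> P" for p'
  proof -
    have "(\<Sum>p\<in>P. f p * g p p') = (\<Sum>p\<in>P. if p = p' then f p else 0)"
      using P(3) that by (intro sum.cong) auto
    also have "\<dots> = f p'" using P(1) that by simp
    finally show ?thesis by (simp add: r_def)
  qed
  show ?case
  proof (cases "\<forall>x. r x = 0")
    case True
    have fx: "f x = (\<Sum>p\<in>P. f p * g p x)" for x using True[rule_format, of x] by (simp add: r_def)
    show ?thesis
    proof (intro exI conjI)
      show "finite P" "\<forall>p\<in>P. lin (insert f F) (g p)"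
        "\<forall>p\<in>P. \<forall>p'\<in>P. g p p' = (if p = p' then 1 else 0)" using P mono by auto
      show "\<forall>h. lin (insert f F) h \<longrightarrow> (\<forall>x. h x = (\<Sum>p\<in>P. h p * g p x))"
      proof (intro allI impI)
        fix h x assume "lin (insert f F) h"
        then obtain c h0 where h0: "lin F h0" "h = (\<lambda>x. c * f x + h0 x)"
          using lin_insert_decomp by blast
        have "h x = c * (\<Sum>p\<in>P. f p * g p x) + (\<Sum>p\<in>P. h0 p * g p x)"
          using h0 fx P(4) by metis
        also have "\<dots> = (\<Sum>p\<in>P. h p * g p x)"
          by (simp add: h0(2) sum_distrib_left sum.distrib algebra_simps)
        finally show "h x = (\<Sum>p\<in>P. h p * g p x)" .
      qed
    qed
  next
    case False
    then obtain q where q: "r q \<noteq> 0" by blast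
    have qP: "q \<notin> P" using q r_P by blast
    define g' where "g' y = (if y = q then (\<lambda>x. r x / r q) else (\<lambda>x. g y x - g y q * r x / r q))" for y
    have g'_lin: "lin (insert f F) (g' p)" if "p \<in> insert q P" for p
    proof (cases "p = q")
      case True
      then show ?thesis unfolding g'_def using r_lin lin_scale[OF r_lin, of "1 / r q"] by simp
    next
      case False
      then have "p \<in> P" using that by auto
      then have "lin (insert f F) (\<lambda>x. g p x - (g p q / r q) * r x)"
        using P(2) by (intro lin_diff mono lin_scale r_lin) auto
      then show ?thesis using False unfolding g'_def by simp
    qed
    have g'_delta: "g' p p' = (if p = p' then 1 else 0)" if "p \<in> insert q P" "p' \<in> insert q P" for p p'
      using that qP q r_P P(3) by (auto simp: g'_def)
    have repr: "h x = (\<Sum>p\<in>insert q P. h p * g' p x)" if h: "lin (insert f F) h" for h x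
    proof -
      define k where "k y = h y - (\<Sum>p\<in>insert q P. h p * g' p y)" for y
      have k_lin: "lin (insert f F) k"
        unfolding k_def[abs_def] using h g'_lin P(1)
        by (intro lin_diff lin_sum lin_scale) auto
      have k0: "k y = 0" if "y \<in> insert q P" for y
      proof -
        have "(\<Sum>p\<in>insert q P. h p * g' p y) = (\<Sum>p\<in>insert q P. if p = y then h p else 0)"
          using g'_delta that by (intro sum.cong) auto
        also have "\<dots> = h y" using P(1) that by simp
        finally show ?thesis by (simp add: k_def)
      qed
      obtain d k0' where dk: "lin F k0'" "k = (\<lambda>x. d * f x + k0' x)"
        using lin_insert_decomp[OF k_lin] by blast
      define k1 where "k1 x = k0' x + d * (\<Sum>p\<in>P. f p * g p x)" for x
      have k1_lin: "lin F k1" unfolding k1_def[abs_def] using dk P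
        by (intro lin_add lin_scale lin_sum) auto
      have k_eq: "k x = d * r x + k1 x" for x
        by (simp add: dk(2) k1_def r_def algebra_simps)
      have k1P: "k1 p = 0" if "p \<in> P" for p
        using k_eq[of p] k0[of p] r_P[OF that] that by simp
      have k1z: "k1 x = 0" for x
      proof -
        have "k1 x = (\<Sum>p\<in>P. k1 p * g p x)" using P(4) k1_lin by blast
        also have "\<dots> = 0" using k1P by simp
        finally show ?thesis .
      qed
      have "d * r q = 0" using k_eq[of q] k0[of q] k1z by simp
      then have "d = 0" using q by simp
      then have "k x = 0" using k_eq k1z by simp
      then show ?thesis by (simp add: k_def)
    qed
    show ?thesis
      apply (rule exI[of _ "insert q P"], rule exI[of _ g'])
      using P(1) g'_lin g'_delta repr by auto
  qed
qed



definition eqd :: "'n::finite \<Rightarrow> 'n pt" where "eqd i = (axis i 1, 0, 0)"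
definition epd :: "'n::finite \<Rightarrow> 'n pt" where "epd i = (0, axis i 1, 0)"
definition etd :: "'n::finite pt" where "etd = (0, 0, 1)"

definition Mset :: "nat \<Rightarrow> 'n::finite mindex set" where "Mset m = {a. mdeg a = m}"
definition hp :: "nat \<Rightarrow> ('n::finite pt \<Rightarrow> real) \<Rightarrow> bool" where
  "hp m f \<longleftrightarrow> lin (monom_xi ` Mset m) f"

lemma axis_nth': "axis i (1::real) $ j = (if j = i then 1 else 0)"
  by (simp add: axis_def)

lemma coord_eqd:
  "qc (\<xi> + s *\<^sub>R eqd i) j = qc \<xi> j + (if j = i then s else 0)"
  "pc (\<xi> + s *\<^sub>R eqd i) j = pc \<xi> j" "tc (\<xi> + s *\<^sub>R eqd i) = tc \<xi>"
  by (auto simp: qc_def pc_def tc_def eqd_def axis_def)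
lemma coord_epd:
  "qc (\<xi> + s *\<^sub>R epd i) j = qc \<xi> j"
  "pc (\<xi> + s *\<^sub>R epd i) j = pc \<xi> j + (if j = i then s else 0)" "tc (\<xi> + s *\<^sub>R epd i) = tc \<xi>"
  by (auto simp: qc_def pc_def tc_def epd_def axis_def)
lemma coord_etd:
  "qc (\<xi> + s *\<^sub>R etd) j = qc \<xi> j"
  "pc (\<xi> + s *\<^sub>R etd) j = pc \<xi> j" "tc (\<xi> + s *\<^sub>R etd) = tc \<xi> + s"
  by (auto simp: qc_def pc_def tc_def etd_def)

lemma finite_Mset: "finite (Mset m :: 'n::finite mindex set)"
proof -
  have le: "f i \<le> sum f UNIV" for f :: "'n \<Rightarrow> nat" and i by (rule member_le_sum) auto
  have "(Mset m :: 'n mindex set) \<subseteq> (Pi\<^sub>E UNIV (\<lambda>_. {..m})) \<times> (Pi\<^sub>E UNIV (\<lambda>_. {..m})) \<times> {..m}"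
  proof
    fix a :: "'n mindex" assume "a \<in> Mset m"
    then have "mdeg a = m" by (simp add: Mset_def)
    then have "fst a i \<le> m" "fst (snd a) i \<le> m" "snd (snd a) \<le> m" for i
      unfolding mdeg_def using le[of "fst a" i] le[of "fst (snd a)" i] by linarith+
    then show "a \<in> (Pi\<^sub>E UNIV (\<lambda>_. {..m})) \<times> (Pi\<^sub>E UNIV (\<lambda>_. {..m})) \<times> {..m}"
      by (auto simp: PiE_UNIV_domain mem_Times_iff)
  qed
  moreover have "finite ((Pi\<^sub>E UNIV (\<lambda>_. {..m})) \<times> (Pi\<^sub>E UNIV (\<lambda>_. {..m})) \<times> {..m::nat} :: 'n mindex set)"
    by (intro finite_cartesian_product finite_PiE) auto
  ultimately show ?thesis by (rule finite_subset)
qed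

lemma hom_poly_iff: "hom_poly_xi m S \<longleftrightarrow> (\<forall>x. hp m (\<lambda>\<xi>. S (x,\<xi>)))"
proof
  assume h: "hom_poly_xi m S"
  show "\<forall>x. hp m (\<lambda>\<xi>. S (x,\<xi>))"
  proof
    fix x
    obtain c where c: "\<forall>\<xi>. S (x, \<xi>) = (\<Sum>a\<in>{a. mdeg a = m}. c a * monom_xi a \<xi>)"
      using h unfolding hom_poly_xi_def by blast
    have "hp m (\<lambda>\<xi>. \<Sum>a\<in>Mset m. c a * monom_xi a \<xi>)"
      unfolding hp_def by (intro lin_sum lin_base_scale finite_Mset) auto
    moreover have "(\<lambda>\<xi>. S (x,\<xi>)) = (\<lambda>\<xi>. \<Sum>a\<in>Mset m. c a * monom_xi a \<xi>)"
      by (rule ext) (simp only: c Mset_def)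
    ultimately show "hp m (\<lambda>\<xi>. S (x,\<xi>))" by simp
  qed
next
  assume h: "\<forall>x. hp m (\<lambda>\<xi>. S (x,\<xi>))"
  show "hom_poly_xi m S" unfolding hom_poly_xi_def
  proof
    fix x
    have "lin (monom_xi ` Mset m) (\<lambda>\<xi>. S (x,\<xi>))" using h hp_def by blast
    then have "\<exists>c. (\<lambda>\<xi>. S (x,\<xi>)) = (\<lambda>\<xi>. \<Sum>a\<in>Mset m. c a * monom_xi a \<xi>)"
    proof (induction rule: lin_induct)
      case zero
      then show ?case by (intro exI[of _ "\<lambda>a. 0"]) simp
    next
      case (step c0 f g)
      then obtain b c where b: "b \<in> Mset m" "f = monom_xi b" and c: "g = (\<lambda>\<xi>. \<Sum>a\<in>Mset m. c a * monom_xi a \<xi>)"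
        by blast
      have "(\<lambda>\<xi>. c0 * f \<xi> + g \<xi>) = (\<lambda>\<xi>. \<Sum>a\<in>Mset m. (c a + (if a = b then c0 else 0)) * monom_xi a \<xi>)"
        using b by (auto simp: finite_Mset c distrib_right sum.distrib if_distrib[of "\<lambda>x. x * _"] cong: if_cong)
      then show ?case by (rule exI[of _ "\<lambda>a. c a + (if a = b then c0 else 0)"])
    qed
    then show "\<exists>c. \<forall>\<xi>. S (x, \<xi>) = (\<Sum>a\<in>{a. mdeg a = m}. c a * monom_xi a \<xi>)"
      by (auto simp: Mset_def fun_eq_iff)
  qed
qed


definition updq :: "'n::finite \<Rightarrow> nat \<Rightarrow> 'n mindex \<Rightarrow> 'n mindex" where
  "updq i k a = ((fst a)(i := k), snd a)"
definition updp :: "'n::finite \<Rightarrow> nat \<Rightarrow> 'n mindex \<Rightarrow> 'n mindex" where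
  "updp i k a = (fst a, (fst (snd a))(i := k), snd (snd a))"
definition updt :: "nat \<Rightarrow> 'n::finite mindex \<Rightarrow> 'n mindex" where
  "updt k a = (fst a, fst (snd a), k)"

definition Rq :: "'n::finite \<Rightarrow> 'n mindex \<Rightarrow> 'n pt \<Rightarrow> real" where
  "Rq i a \<xi> = (\<Prod>j\<in>UNIV-{i}. qc \<xi> j ^ fst a j) * (\<Prod>j\<in>UNIV. pc \<xi> j ^ fst (snd a) j) * tc \<xi> ^ snd (snd a)"
definition Rp :: "'n::finite \<Rightarrow> 'n mindex \<Rightarrow> 'n pt \<Rightarrow> real" where
  "Rp i a \<xi> = (\<Prod>j\<in>UNIV. qc \<xi> j ^ fst a j) * (\<Prod>j\<in>UNIV-{i}. pc \<xi> j ^ fst (snd a) j) * tc \<xi> ^ snd (snd a)"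
definition Rt :: "'n::finite mindex \<Rightarrow> 'n pt \<Rightarrow> real" where
  "Rt a \<xi> = (\<Prod>j\<in>UNIV. qc \<xi> j ^ fst a j) * (\<Prod>j\<in>UNIV. pc \<xi> j ^ fst (snd a) j)"

lemma monom_splitq: "monom_xi a \<xi> = qc \<xi> i ^ fst a i * Rq i a \<xi>"
  unfolding monom_xi_def Rq_def by (simp add: prod.remove[of UNIV i] mult.assoc)
lemma monom_splitp: "monom_xi a \<xi> = pc \<xi> i ^ fst (snd a) i * Rp i a \<xi>"
  unfolding monom_xi_def Rp_def by (simp add: prod.remove[of UNIV i] mult.assoc mult.left_commute)
lemma monom_splitt: "monom_xi a \<xi> = tc \<xi> ^ snd (snd a) * Rt a \<xi>"
  unfolding monom_xi_def Rt_def by (simp add: mult.commute)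

lemma Rq_upd: "Rq i (updq i k a) \<xi> = Rq i a \<xi>"
  unfolding Rq_def updq_def by (auto intro!: prod.cong)
lemma Rp_upd: "Rp i (updp i k a) \<xi> = Rp i a \<xi>"
  unfolding Rp_def updp_def by (auto intro!: prod.cong)
lemma Rt_upd: "Rt (updt k a) \<xi> = Rt a \<xi>"
  unfolding Rt_def updt_def by simp

lemma Rq_shift: "Rq i a (\<xi> + s *\<^sub>R eqd i) = Rq i a \<xi>"
  unfolding Rq_def coord_eqd by (auto intro!: prod.cong)
lemma Rp_shift: "Rp i a (\<xi> + s *\<^sub>R epd i) = Rp i a \<xi>"
  unfolding Rp_def coord_epd by (auto intro!: prod.cong)
lemma Rt_shift: "Rt a (\<xi> + s *\<^sub>R etd) = Rt a \<xi>"
  unfolding Rt_def coord_etd by simp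

lemma monom_updq: "monom_xi (updq i k a) \<xi> = qc \<xi> i ^ k * Rq i a \<xi>"
  using monom_splitq[of "updq i k a" \<xi> i] by (simp add: Rq_upd) (simp add: updq_def)
lemma monom_updp: "monom_xi (updp i k a) \<xi> = pc \<xi> i ^ k * Rp i a \<xi>"
  using monom_splitp[of "updp i k a" \<xi> i] by (simp add: Rp_upd) (simp add: updp_def)
lemma monom_updt: "monom_xi (updt k a) \<xi> = tc \<xi> ^ k * Rt a \<xi>"
  using monom_splitt[of "updt k a" \<xi>] by (simp add: Rt_upd) (simp add: updt_def)

lemma sum_upd: "sum (f(i := k)) UNIV + f i = sum f UNIV + (k::nat)" for f :: "'n::finite \<Rightarrow> nat"
proof -
  have "sum (f(i := k)) UNIV = k + sum (f(i := k)) (UNIV - {i})" by (simp add: sum.remove[of UNIV i])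
  moreover have "sum (f(i := k)) (UNIV - {i}) = sum f (UNIV - {i})" by (auto intro!: sum.cong)
  moreover have "sum f UNIV = f i + sum f (UNIV - {i})" by (simp add: sum.remove[of UNIV i])
  ultimately show ?thesis by simp
qed

lemma mdeg_updq: "mdeg (updq i k a) + fst a i = mdeg a + k"
  unfolding mdeg_def updq_def using sum_upd[of "fst a" i k] by simp
lemma mdeg_updp: "mdeg (updp i k a) + fst (snd a) i = mdeg a + k"
  unfolding mdeg_def updp_def using sum_upd[of "fst (snd a)" i k] by simp
lemma mdeg_updt: "mdeg (updt k a) + snd (snd a) = mdeg a + k"
  unfolding mdeg_def updt_def by simp

lemma le_mdeg: fixes a :: "'n::finite mindex" and i :: 'n
  shows "fst a i \<le> mdeg a" "fst (snd a) i \<le> mdeg a" "snd (snd a) \<le> mdeg a"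
proof -
  have le: "f i \<le> sum f UNIV" for f :: "'n \<Rightarrow> nat" by (rule member_le_sum) auto
  show "fst a i \<le> mdeg a" "fst (snd a) i \<le> mdeg a" "snd (snd a) \<le> mdeg a"
    unfolding mdeg_def using le[of "fst a"] le[of "fst (snd a)"] by linarith+
qed

lemma DERIV_powR: "((\<lambda>s. (x + s) ^ k * R) has_real_derivative real k * x ^ (k - 1) * R) (at 0)"
  by (auto intro!: derivative_eq_intros)

lemma monom_DERIV_q: "((\<lambda>s. monom_xi a (\<xi> + s *\<^sub>R eqd i)) has_real_derivative
    real (fst a i) * monom_xi (updq i (fst a i - 1) a) \<xi>) (at 0)"
proof -
  have "(\<lambda>s. monom_xi a (\<xi> + s *\<^sub>R eqd i)) = (\<lambda>s. (qc \<xi> i + s) ^ fst a i * Rq i a \<xi>)"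
    by (rule ext) (subst monom_splitq[of _ _ i], simp add: Rq_shift coord_eqd)
  then show ?thesis using DERIV_powR by (simp add: monom_updq mult.assoc)
qed
lemma monom_DERIV_p: "((\<lambda>s. monom_xi a (\<xi> + s *\<^sub>R epd i)) has_real_derivative
    real (fst (snd a) i) * monom_xi (updp i (fst (snd a) i - 1) a) \<xi>) (at 0)"
proof -
  have "(\<lambda>s. monom_xi a (\<xi> + s *\<^sub>R epd i)) = (\<lambda>s. (pc \<xi> i + s) ^ fst (snd a) i * Rp i a \<xi>)"
    by (rule ext) (subst monom_splitp[of _ _ i], simp add: Rp_shift coord_epd)
  then show ?thesis using DERIV_powR by (simp add: monom_updp mult.assoc)
qed
lemma monom_DERIV_t: "((\<lambda>s. monom_xi a (\<xi> + s *\<^sub>R etd)) has_real_derivative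
    real (snd (snd a)) * monom_xi (updt (snd (snd a) - 1) a) \<xi>) (at 0)"
proof -
  have "(\<lambda>s. monom_xi a (\<xi> + s *\<^sub>R etd)) = (\<lambda>s. (tc \<xi> + s) ^ snd (snd a) * Rt a \<xi>)"
    by (rule ext) (subst monom_splitt, simp add: Rt_shift coord_etd)
  then show ?thesis using DERIV_powR by (simp add: monom_updt mult.assoc)
qed

lemma mult_monom_q: "qc \<xi> i * monom_xi a \<xi> = monom_xi (updq i (fst a i + 1) a) \<xi>"
  by (subst monom_splitq[of _ _ i]) (simp add: monom_updq)
lemma mult_monom_p: "pc \<xi> i * monom_xi a \<xi> = monom_xi (updp i (fst (snd a) i + 1) a) \<xi>"
  by (subst monom_splitp[of _ _ i]) (simp add: monom_updp)
lemma mult_monom_t: "tc \<xi> * monom_xi a \<xi> = monom_xi (updt (snd (snd a) + 1) a) \<xi>"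
  by (subst monom_splitt) (simp add: monom_updt)

lemma euler_q: "qc \<xi> i * (real (fst a i) * monom_xi (updq i (fst a i - 1) a) \<xi>) = real (fst a i) * monom_xi a \<xi>"
  by (cases "fst a i") (simp_all add: monom_updq monom_splitq[of a \<xi> i])
lemma euler_p: "pc \<xi> i * (real (fst (snd a) i) * monom_xi (updp i (fst (snd a) i - 1) a) \<xi>) = real (fst (snd a) i) * monom_xi a \<xi>"
  by (cases "fst (snd a) i") (simp_all add: monom_updp monom_splitp[of a \<xi> i])
lemma euler_t: "tc \<xi> * (real (snd (snd a)) * monom_xi (updt (snd (snd a) - 1) a) \<xi>) = real (snd (snd a)) * monom_xi a \<xi>"
  by (cases "snd (snd a)") (simp_all add: monom_updt monom_splitt[of a \<xi>])


lemma hp_pd_gen: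
  fixes w :: "'n::finite pt" and K :: "'n mindex \<Rightarrow> nat" and Dc :: "'n mindex \<Rightarrow> 'n mindex"
  assumes D: "\<And>a \<xi>. ((\<lambda>s. monom_xi a (\<xi> + s *\<^sub>R w)) has_real_derivative real (K a) * monom_xi (Dc a) \<xi>) (at 0)"
    and K: "\<And>a. K a \<le> mdeg a" and Dm: "\<And>a. 0 < K a \<Longrightarrow> mdeg (Dc a) + 1 = mdeg a"
    and h: "hp m f"
  shows "(\<forall>\<xi>. dfa w f \<xi>) \<and> hp (m - 1) (pd w f) \<and> (m = 0 \<longrightarrow> pd w f = (\<lambda>\<xi>. 0))"
  using h[unfolded hp_def]
proof (induction rule: lin_induct)
  case zero
  have "pd w (\<lambda>x. 0) = (\<lambda>\<xi>. 0)" by (rule ext) (rule pd_const)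
  then show ?case by (simp add: dfa_const hp_def lin_zero)
next
  case (step c f g)
  then obtain a where a: "a \<in> Mset m" "f = monom_xi a" by blast
  have df: "dfa w f \<xi>" for \<xi> unfolding a(2) by (rule dfa_I[OF D])
  have pf: "pd w f \<xi> = real (K a) * monom_xi (Dc a) \<xi>" for \<xi> unfolding a(2) by (rule pd_eqI[OF D])
  have dg: "dfa w g \<xi>" for \<xi> using step by blast
  have pdh: "pd w (\<lambda>x. c * f x + g x) = (\<lambda>\<xi>. c * (real (K a) * monom_xi (Dc a) \<xi>) + pd w g \<xi>)"
    by (rule ext) (simp add: pd_add pd_mult dfa_mult dfa_const df dg pd_const pf)
  have hK: "hp (m - 1) (\<lambda>\<xi>. real (K a) * monom_xi (Dc a) \<xi>)"
  proof (cases "K a = 0")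
    case True
    then show ?thesis by (simp add: hp_def lin_zero)
  next
    case False
    then have "mdeg (Dc a) = m - 1" using Dm[of a] a(1) by (simp add: Mset_def)
    then show ?thesis unfolding hp_def by (intro lin_base_scale) (auto simp: Mset_def)
  qed
  have IHg: "hp (m - 1) (pd w g)" using step by blast
  have "hp (m - 1) (pd w (\<lambda>x. c * f x + g x))"
    unfolding pdh hp_def using lin_add[OF lin_scale[OF hK[unfolded hp_def]] IHg[unfolded hp_def], of c] .
  moreover have "m = 0 \<longrightarrow> pd w (\<lambda>x. c * f x + g x) = (\<lambda>\<xi>. 0)"
    using K[of a] a(1) step by (auto simp: pdh Mset_def)
  moreover have "dfa w (\<lambda>x. c * f x + g x) \<xi>" for \<xi>
    by (intro dfa_add dfa_mult dfa_const df dg)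
  ultimately show ?case by blast
qed

lemma hp_pd_q: assumes "hp m f"
  shows "(\<forall>\<xi>. dfa (eqd i) f \<xi>) \<and> hp (m - 1) (pd (eqd i) f) \<and> (m = 0 \<longrightarrow> pd (eqd i) f = (\<lambda>\<xi>. 0))"
proof (rule hp_pd_gen[OF monom_DERIV_q le_mdeg(1) _ assms])
  fix a :: "'a mindex" assume "0 < fst a i"
  then show "mdeg (updq i (fst a i - 1) a) + 1 = mdeg a" using mdeg_updq[of i "fst a i - 1" a] by simp
qed
lemma hp_pd_p: assumes "hp m f"
  shows "(\<forall>\<xi>. dfa (epd i) f \<xi>) \<and> hp (m - 1) (pd (epd i) f) \<and> (m = 0 \<longrightarrow> pd (epd i) f = (\<lambda>\<xi>. 0))"
proof (rule hp_pd_gen[OF monom_DERIV_p le_mdeg(2) _ assms])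
  fix a :: "'a mindex" assume "0 < fst (snd a) i"
  then show "mdeg (updp i (fst (snd a) i - 1) a) + 1 = mdeg a" using mdeg_updp[of i "fst (snd a) i - 1" a] by simp
qed
lemma hp_pd_t: assumes "hp m f"
  shows "(\<forall>\<xi>. dfa etd f \<xi>) \<and> hp (m - 1) (pd etd f) \<and> (m = 0 \<longrightarrow> pd etd f = (\<lambda>\<xi>. 0))"
proof (rule hp_pd_gen[OF monom_DERIV_t le_mdeg(3) _ assms])
  fix a :: "'a mindex" assume "0 < snd (snd a)"
  then show "mdeg (updt (snd (snd a) - 1) a) + 1 = mdeg a" using mdeg_updt[of "snd (snd a) - 1" a] by simp
qed

lemma hp_mult_gen:
  fixes \<phi> :: "'n::finite pt \<Rightarrow> real"
  assumes I: "\<And>a \<xi>. \<phi> \<xi> * monom_xi a \<xi> = monom_xi (Inc a) \<xi>" and Im: "\<And>a. mdeg (Inc a) = mdeg a + 1"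
    and h: "hp m f"
  shows "hp (Suc m) (\<lambda>\<xi>. \<phi> \<xi> * f \<xi>)"
  using h[unfolded hp_def]
proof (induction rule: lin_induct)
  case zero
  then show ?case by (simp add: hp_def lin_zero)
next
  case (step c f g)
  then obtain a where a: "a \<in> Mset m" "f = monom_xi a" by blast
  have "hp (Suc m) (\<lambda>\<xi>. c * monom_xi (Inc a) \<xi> + \<phi> \<xi> * g \<xi>)"
    using step a Im unfolding hp_def by (intro lin_add lin_base_scale) (auto simp: Mset_def)
  moreover have "(\<lambda>\<xi>. \<phi> \<xi> * (c * f \<xi> + g \<xi>)) = (\<lambda>\<xi>. c * monom_xi (Inc a) \<xi> + \<phi> \<xi> * g \<xi>)"
    by (rule ext) (simp add: a(2) I[symmetric] algebra_simps)
  ultimately show ?case by simp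
qed

lemma hp_mult_q: assumes "hp m f" shows "hp (Suc m) (\<lambda>\<xi>. qc \<xi> i * f \<xi>)"
proof (rule hp_mult_gen[OF mult_monom_q _ assms])
  fix a :: "'a mindex"
  show "mdeg (updq i (fst a i + 1) a) = mdeg a + 1" using mdeg_updq[of i "fst a i + 1" a] by simp
qed
lemma hp_mult_p: assumes "hp m f" shows "hp (Suc m) (\<lambda>\<xi>. pc \<xi> i * f \<xi>)"
proof (rule hp_mult_gen[OF mult_monom_p _ assms])
  fix a :: "'a mindex"
  show "mdeg (updp i (fst (snd a) i + 1) a) = mdeg a + 1" using mdeg_updp[of i "fst (snd a) i + 1" a] by simp
qed
lemma hp_mult_t: assumes "hp m f" shows "hp (Suc m) (\<lambda>\<xi>. tc \<xi> * f \<xi>)"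
proof (rule hp_mult_gen[OF mult_monom_t _ assms])
  fix a :: "'a mindex"
  show "mdeg (updt (snd (snd a) + 1) a) = mdeg a + 1" using mdeg_updt[of "snd (snd a) + 1" a] by simp
qed

lemma monom_euler:
  "(\<Sum>i\<in>UNIV. qc \<xi> i * pd (eqd i) (monom_xi a) \<xi> + pc \<xi> i * pd (epd i) (monom_xi a) \<xi>)
     + tc \<xi> * pd etd (monom_xi a) \<xi> = real (mdeg a) * monom_xi a \<xi>"
proof -
  have "(\<Sum>i\<in>UNIV. qc \<xi> i * pd (eqd i) (monom_xi a) \<xi> + pc \<xi> i * pd (epd i) (monom_xi a) \<xi>)
     + tc \<xi> * pd etd (monom_xi a) \<xi> =
     (\<Sum>i\<in>UNIV. real (fst a i) * monom_xi a \<xi> + real (fst (snd a) i) * monom_xi a \<xi>)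
     + real (snd (snd a)) * monom_xi a \<xi>"
    by (simp only: pd_eqI[OF monom_DERIV_q] pd_eqI[OF monom_DERIV_p] pd_eqI[OF monom_DERIV_t]
        euler_q euler_p euler_t)
  also have "\<dots> = real (mdeg a) * monom_xi a \<xi>"
    by (simp add: mdeg_def sum.distrib sum_distrib_left algebra_simps)
  finally show ?thesis .
qed

lemma hp_euler:
  assumes "hp m f"
  shows "(\<Sum>i\<in>UNIV. qc \<xi> i * pd (eqd i) f \<xi> + pc \<xi> i * pd (epd i) f \<xi>)
     + tc \<xi> * pd etd f \<xi> = real m * f \<xi>"
  using assms[unfolded hp_def]
proof (induction rule: lin_induct)
  case zero
  then show ?case by (simp add: pd_const)
next
  case (step c f g)
  then obtain a where a: "a \<in> Mset m" "f = monom_xi a" by blast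
  have g: "hp m g" using step hp_def by blast
  have dq: "dfa (eqd i) f \<xi>" "dfa (eqd i) g \<xi>" for i
    unfolding a(2) using hp_pd_q[OF g] by (blast intro: dfa_I[OF monom_DERIV_q])+
  have dp: "dfa (epd i) f \<xi>" "dfa (epd i) g \<xi>" for i
    unfolding a(2) using hp_pd_p[OF g] by (blast intro: dfa_I[OF monom_DERIV_p])+
  have dt: "dfa etd f \<xi>" "dfa etd g \<xi>"
    unfolding a(2) using hp_pd_t[OF g] by (blast intro: dfa_I[OF monom_DERIV_t])+
  have "(\<Sum>i\<in>UNIV. qc \<xi> i * pd (eqd i) (\<lambda>x. c * f x + g x) \<xi> + pc \<xi> i * pd (epd i) (\<lambda>x. c * f x + g x) \<xi>)
     + tc \<xi> * pd etd (\<lambda>x. c * f x + g x) \<xi> =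
     c * ((\<Sum>i\<in>UNIV. qc \<xi> i * pd (eqd i) f \<xi> + pc \<xi> i * pd (epd i) f \<xi>) + tc \<xi> * pd etd f \<xi>)
     + ((\<Sum>i\<in>UNIV. qc \<xi> i * pd (eqd i) g \<xi> + pc \<xi> i * pd (epd i) g \<xi>) + tc \<xi> * pd etd g \<xi>)"
    by (simp add: pd_add pd_mult dfa_mult dfa_const dq dp dt pd_const sum.distrib sum_distrib_left algebra_simps)
  also have "\<dots> = c * (real m * f \<xi>) + real m * g \<xi>"
    using step(3) monom_euler[of \<xi> a] a by (simp add: Mset_def)
  finally show ?case by (simp add: algebra_simps)
qed



lemma d_eqs: "d_q i = (eqd i, 0)" "d_p i = (epd i, 0)" "d_t = (etd, 0)"
  "d_xiq i = (0, eqd i)" "d_xip i = (0, epd i)" "d_xit = (0, etd)"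
  by (simp_all add: d_q_def d_p_def d_t_def d_xiq_def d_xip_def d_xit_def eqd_def epd_def etd_def zero_prod_def)

lemma axis_Basis: "axis i (1::real) \<in> (Basis :: (real^'n::finite) set)"
  unfolding Basis_vec_def by auto

lemma Basis_left: "u \<in> Basis \<Longrightarrow> (u, 0::'b::euclidean_space) \<in> (Basis :: ('a::euclidean_space \<times> 'b) set)"
  by (simp add: Basis_prod_def)
lemma Basis_right: "v \<in> Basis \<Longrightarrow> (0::'a::euclidean_space, v) \<in> (Basis :: ('a \<times> 'b::euclidean_space) set)"
  by (simp add: Basis_prod_def)

lemma Basis_pt: fixes i :: "'n::finite" shows "eqd i \<in> Basis" "epd i \<in> Basis" "(etd :: 'n pt) \<in> Basis"
proof -
  have "eqd i = (axis i 1, 0)" by (simp add: eqd_def zero_prod_def)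
  then show "eqd i \<in> Basis" using Basis_left[OF axis_Basis] by simp
  have "epd i = (0, (axis i 1, 0))" by (simp add: epd_def)
  then show "epd i \<in> Basis" using Basis_right[OF Basis_left[OF axis_Basis]] by simp
  have "((0::real^'n), ((0::real^'n), (1::real))) \<in> Basis" by (intro Basis_right) simp
  then show "(etd :: 'n pt) \<in> Basis" by (simp add: etd_def)
qed

lemma Basis_d[simp]: "d_q i \<in> Basis" "d_p i \<in> Basis" "d_t \<in> Basis"
  "d_xiq i \<in> Basis" "d_xip i \<in> Basis" "d_xit \<in> Basis"
  unfolding d_eqs using Basis_pt by (auto intro: Basis_left Basis_right)

lemma pd_slice_xi: "pd (0, w) S (x, \<xi>) = pd w (\<lambda>\<eta>. S (x, \<eta>)) \<xi>"
  unfolding pd_def by simp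
lemma dfa_slice_xi: "dfa (0, w) S (x, \<xi>) = dfa w (\<lambda>\<eta>. S (x, \<eta>)) \<xi>"
  unfolding dfa_def by simp
lemma pd_slice_x: "pd (v, 0) S (x, \<xi>) = pd v (\<lambda>y. S (y, \<xi>)) x"
  unfolding pd_def by simp
lemma dfa_slice_x: "dfa (v, 0) S (x, \<xi>) = dfa v (\<lambda>y. S (y, \<xi>)) x"
  unfolding dfa_def by simp

lemma coord_fun_eqs:
  "(\<lambda>z::'n::finite pt \<times> 'n pt. qc (fst z) i) = (\<lambda>z. z \<bullet> d_q i)"
  "(\<lambda>z::'n::finite pt \<times> 'n pt. pc (fst z) i) = (\<lambda>z. z \<bullet> d_p i)"
  "(\<lambda>z::'n::finite pt \<times> 'n pt. tc (fst z)) = (\<lambda>z. z \<bullet> d_t)"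
  "(\<lambda>z::'n::finite pt \<times> 'n pt. qc (snd z) i) = (\<lambda>z. z \<bullet> d_xiq i)"
  "(\<lambda>z::'n::finite pt \<times> 'n pt. pc (snd z) i) = (\<lambda>z. z \<bullet> d_xip i)"
  "(\<lambda>z::'n::finite pt \<times> 'n pt. tc (snd z)) = (\<lambda>z. z \<bullet> d_xit)"
  by (auto simp: fun_eq_iff d_q_def d_p_def d_t_def d_xiq_def d_xip_def d_xit_def qc_def pc_def tc_def
      inner_axis inner_prod_def)

lemma smooth_coord[simp]:
  "smooth (\<lambda>z::'n::finite pt \<times> 'n pt. qc (fst z) i)" "smooth (\<lambda>z::'n::finite pt \<times> 'n pt. pc (fst z) i)"
  "smooth (\<lambda>z::'n::finite pt \<times> 'n pt. tc (fst z))" "smooth (\<lambda>z::'n::finite pt \<times> 'n pt. qc (snd z) i)"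
  "smooth (\<lambda>z::'n::finite pt \<times> 'n pt. pc (snd z) i)" "smooth (\<lambda>z::'n::finite pt \<times> 'n pt. tc (snd z))"
  unfolding coord_fun_eqs by (rule smooth_inner)+

lemma pd_coord:
  "pd v (\<lambda>z::'n::finite pt \<times> 'n pt. qc (fst z) i) z = v \<bullet> d_q i"
  "pd v (\<lambda>z::'n::finite pt \<times> 'n pt. pc (fst z) i) z = v \<bullet> d_p i"
  "pd v (\<lambda>z::'n::finite pt \<times> 'n pt. tc (fst z)) z = v \<bullet> d_t"
  "pd v (\<lambda>z::'n::finite pt \<times> 'n pt. qc (snd z) i) z = v \<bullet> d_xiq i"
  "pd v (\<lambda>z::'n::finite pt \<times> 'n pt. pc (snd z) i) z = v \<bullet> d_xip i"
  "pd v (\<lambda>z::'n::finite pt \<times> 'n pt. tc (snd z)) z = v \<bullet> d_xit"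
  unfolding coord_fun_eqs by (rule pd_inner)+

lemma inner_d[simp]:
  "d_q i \<bullet> d_q j = (if i = j then 1 else 0)" "d_q i \<bullet> d_p j = 0" "d_q i \<bullet> d_t = 0"
  "d_q i \<bullet> d_xiq j = 0" "d_q i \<bullet> d_xip j = 0" "d_q i \<bullet> d_xit = 0"
  "d_p i \<bullet> d_q j = 0" "d_p i \<bullet> d_p j = (if i = j then 1 else 0)" "d_p i \<bullet> d_t = 0"
  "d_p i \<bullet> d_xiq j = 0" "d_p i \<bullet> d_xip j = 0" "d_p i \<bullet> d_xit = 0"
  "d_t \<bullet> d_q j = 0" "d_t \<bullet> d_p j = 0" "d_t \<bullet> (d_t::'n::finite pt \<times> 'n pt) = 1"
  "d_t \<bullet> d_xiq j = 0" "d_t \<bullet> d_xip j = 0" "d_t \<bullet> (d_xit::'n::finite pt \<times> 'n pt) = 0"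
  "d_xiq i \<bullet> d_q j = 0" "d_xiq i \<bullet> d_p j = 0" "d_xiq i \<bullet> d_t = 0"
  "d_xiq i \<bullet> d_xiq j = (if i = j then 1 else 0)" "d_xiq i \<bullet> d_xip j = 0" "d_xiq i \<bullet> d_xit = 0"
  "d_xip i \<bullet> d_q j = 0" "d_xip i \<bullet> d_p j = 0" "d_xip i \<bullet> d_t = 0"
  "d_xip i \<bullet> d_xiq j = 0" "d_xip i \<bullet> d_xip j = (if i = j then 1 else 0)" "d_xip i \<bullet> d_xit = 0"
  "d_xit \<bullet> d_q j = 0" "d_xit \<bullet> d_p j = 0" "d_xit \<bullet> (d_t::'n::finite pt \<times> 'n pt) = 0"
  "d_xit \<bullet> d_xiq j = 0" "d_xit \<bullet> d_xip j = 0" "d_xit \<bullet> (d_xit::'n::finite pt \<times> 'n pt) = 1"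
  by (auto simp: d_q_def d_p_def d_t_def d_xiq_def d_xip_def d_xit_def inner_prod_def inner_axis_axis)


definition xidir :: "'n::finite pt \<Rightarrow> bool" where
  "xidir w \<longleftrightarrow> (\<forall>m f \<xi>. hp m f \<longrightarrow> dfa w f \<xi>)"

lemma xidir: "xidir (eqd i)" "xidir (epd i)" "xidir etd"
  unfolding xidir_def using hp_pd_q hp_pd_p hp_pd_t by blast+

lemma Rsp_iff: "S \<in> Rsp \<delta> m \<longleftrightarrow> smooth S \<and> hom_poly_xi m S"
  by (simp add: Rsp_def Sspace_def)

lemma lagrange_hp:
  "\<exists>P g. finite P \<and> (\<forall>p\<in>P. hp m (g p)) \<and> (\<forall>f. hp m f \<longrightarrow> (\<forall>\<xi>. f \<xi> = (\<Sum>p\<in>P. f p * g p \<xi>)))"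
  using lagrange[OF finite_imageI[OF finite_Mset, of monom_xi m]] unfolding hp_def by blast

lemma pd_lincomb:
  "finite P \<Longrightarrow> (\<And>p. p \<in> P \<Longrightarrow> dfa w (G p) \<xi>) \<Longrightarrow>
    pd w (\<lambda>\<eta>. \<Sum>p\<in>P. c p * G p \<eta>) \<xi> = (\<Sum>p\<in>P. c p * pd w (G p) \<xi>)"
  by (simp add: pd_sum pd_mult dfa_mult dfa_const pd_const)
lemma pd_lincomb':
  "finite P \<Longrightarrow> (\<And>p. p \<in> P \<Longrightarrow> dfa w (G p) \<xi>) \<Longrightarrow>
    pd w (\<lambda>\<eta>. \<Sum>p\<in>P. G p \<eta> * c p) \<xi> = (\<Sum>p\<in>P. pd w (G p) \<xi> * c p)"
  by (simp add: pd_sum pd_mult dfa_mult dfa_const pd_const)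

context
  fixes S :: "'n::finite sym" and m :: nat and P :: "'n pt set" and g :: "'n pt \<Rightarrow> 'n pt \<Rightarrow> real"
  assumes sm: "smooth S" and hS: "hom_poly_xi m S"
    and P: "finite P" "\<forall>p\<in>P. hp m (g p)" "\<forall>f. hp m f \<longrightarrow> (\<forall>\<xi>. f \<xi> = (\<Sum>p\<in>P. f p * g p \<xi>))"
begin

lemma rep: "S (y, \<xi>) = (\<Sum>p\<in>P. S (y, p) * g p \<xi>)"
  using P(3) hS[unfolded hom_poly_iff] by blast

lemma dfa_x: "v \<in> Basis \<Longrightarrow> dfa v (\<lambda>y. S (y, p)) x"
  using smooth_dfa[OF sm Basis_left, of v "(x,p)"] dfa_slice_x by metis

lemma x_deriv_repr:
  assumes v: "v \<in> Basis"
  shows "pd (v,0) S (x,\<xi>) = (\<Sum>p\<in>P. pd (v,0) S (x,p) * g p \<xi>)"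
proof -
  have "pd (v,0) S (x,\<xi>) = pd v (\<lambda>y. \<Sum>p\<in>P. S (y, p) * g p \<xi>) x"
    unfolding pd_slice_x by (subst rep) (rule refl)
  also have "\<dots> = (\<Sum>p\<in>P. pd v (\<lambda>y. S (y, p)) x * g p \<xi>)"
    by (rule pd_lincomb'[OF P(1) dfa_x[OF v]])
  finally show ?thesis by (simp add: pd_slice_x)
qed

lemma xi_deriv_repr:
  assumes w: "xidir w"
  shows "pd (0,w) S (x,\<xi>) = (\<Sum>p\<in>P. S (x,p) * pd w (g p) \<xi>)"
proof -
  have "pd (0,w) S (x,\<xi>) = pd w (\<lambda>\<eta>. \<Sum>p\<in>P. S (x, p) * g p \<eta>) \<xi>"
    unfolding pd_slice_xi by (subst rep) (rule refl)
  also have "\<dots> = (\<Sum>p\<in>P. S (x,p) * pd w (g p) \<xi>)"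
    using w P(2) unfolding xidir_def by (intro pd_lincomb[OF P(1)]) blast
  finally show ?thesis .
qed

lemma x_deriv_fun:
  assumes v: "v \<in> Basis"
  shows "(\<lambda>\<eta>. pd (v,0) S (x,\<eta>)) = (\<lambda>\<eta>. \<Sum>p\<in>P. pd (v,0) S (x,p) * g p \<eta>)"
  by (rule ext) (rule x_deriv_repr[OF v])

lemma x_deriv_hp:
  assumes v: "v \<in> Basis"
  shows "hp m (\<lambda>\<xi>. pd (v,0) S (x,\<xi>))"
  unfolding x_deriv_fun[OF v] hp_def
proof (rule lin_sum[OF P(1)])
  fix p assume "p \<in> P"
  then have "lin (monom_xi ` Mset m) (g p)" using P(2) hp_def by blast
  then show "lin (monom_xi ` Mset m) (\<lambda>\<eta>. pd (v,0) S (x,p) * g p \<eta>)" by (rule lin_scale)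
qed

lemma clairaut:
  assumes v: "v \<in> Basis" and w: "xidir w"
  shows "pd (0,w) (pd (v,0) S) (x,\<xi>) = pd (v,0) (pd (0,w) S) (x,\<xi>)"
proof -
  have "pd (0,w) (pd (v,0) S) (x,\<xi>) = pd w (\<lambda>\<eta>. \<Sum>p\<in>P. pd (v,0) S (x,p) * g p \<eta>) \<xi>"
    unfolding pd_slice_xi x_deriv_fun[OF v] by (rule refl)
  also have "\<dots> = (\<Sum>p\<in>P. pd (v,0) S (x,p) * pd w (g p) \<xi>)"
    using w P(2) unfolding xidir_def by (intro pd_lincomb[OF P(1)]) blast
  also have "\<dots> = pd v (\<lambda>y. \<Sum>p\<in>P. S (y,p) * pd w (g p) \<xi>) x"
    by (rule pd_lincomb'[OF P(1) dfa_x[OF v], symmetric, unfolded pd_slice_x[symmetric]])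
  also have "\<dots> = pd (v,0) (pd (0,w) S) (x,\<xi>)"
    unfolding pd_slice_x xi_deriv_repr[OF w] by (rule refl)
  finally show ?thesis .
qed

end

lemma clairaut_S:
  fixes S :: "'n::finite sym"
  assumes "smooth S" "hom_poly_xi m S" "v \<in> Basis" "xidir w"
  shows "pd (0,w) (pd (v,0) S) z = pd (v,0) (pd (0,w) S) z"
proof -
  obtain P :: "'n pt set" and g where "finite P" "\<forall>p\<in>P. hp m (g p)" "\<forall>f. hp m f \<longrightarrow> (\<forall>\<xi>. f \<xi> = (\<Sum>p\<in>P. f p * g p \<xi>))"
    using lagrange_hp[of m] by (elim exE conjE) blast
  from clairaut[OF assms(1,2) this assms(3,4), of "fst z" "snd z"] show ?thesis by simp
qed

lemma x_deriv_hp_S: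
  fixes S :: "'n::finite sym"
  assumes "smooth S" "hom_poly_xi m S" "v \<in> Basis"
  shows "hp m (\<lambda>\<xi>. pd (v,0) S (x,\<xi>))"
proof -
  obtain P :: "'n pt set" and g where "finite P" "\<forall>p\<in>P. hp m (g p)" "\<forall>f. hp m f \<longrightarrow> (\<forall>\<xi>. f \<xi> = (\<Sum>p\<in>P. f p * g p \<xi>))"
    using lagrange_hp[of m] by (elim exE conjE) blast
  from x_deriv_hp[OF assms(1,2) this assms(3)] show ?thesis .
qed

lemma pd_slice_z: "pd (0,w) S z = pd w (\<lambda>\<xi>. S (fst z, \<xi>)) (snd z)"
  using pd_slice_xi[of w S "fst z" "snd z"] by simp

lemma euler_S:
  assumes "hom_poly_xi m S"
  shows "(\<Sum>i\<in>UNIV. qc (snd z) i * pd (d_xiq i) S z + pc (snd z) i * pd (d_xip i) S z)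
     + tc (snd z) * pd d_xit S z = real m * S z"
proof -
  have h: "hp m (\<lambda>\<xi>. S (fst z, \<xi>))" using assms hom_poly_iff by blast
  show ?thesis unfolding d_eqs pd_slice_z using hp_euler[OF h, of "snd z"] by simp
qed

lemma xi_deriv_zero:
  assumes "hom_poly_xi 0 S"
  shows "pd (d_xiq i) S z = 0" "pd (d_xip i) S z = 0" "pd d_xit S z = 0"
proof -
  have h: "hp 0 (\<lambda>\<xi>. S (fst z, \<xi>))" using assms hom_poly_iff by blast
  have "pd (eqd i) (\<lambda>\<xi>. S (fst z, \<xi>)) = (\<lambda>\<xi>. 0)" "pd (epd i) (\<lambda>\<xi>. S (fst z, \<xi>)) = (\<lambda>\<xi>. 0)"
    "pd etd (\<lambda>\<xi>. S (fst z, \<xi>)) = (\<lambda>\<xi>. 0)"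
    using hp_pd_q[OF h, of i] hp_pd_p[OF h, of i] hp_pd_t[OF h] by simp_all
  then show "pd (d_xiq i) S z = 0" "pd (d_xip i) S z = 0" "pd d_xit S z = 0"
    unfolding d_eqs pd_slice_z by simp_all
qed



lemma hp_add: "hp m f \<Longrightarrow> hp m g \<Longrightarrow> hp m (\<lambda>x. f x + g x)" unfolding hp_def by (rule lin_add)
lemma hp_diff: "hp m f \<Longrightarrow> hp m g \<Longrightarrow> hp m (\<lambda>x. f x - g x)" unfolding hp_def by (rule lin_diff)
lemma hp_scale: "hp m f \<Longrightarrow> hp m (\<lambda>x. c * f x)" unfolding hp_def by (rule lin_scale)
lemma hp_sum: "(\<And>i. hp m (G i)) \<Longrightarrow> hp m (\<lambda>x. \<Sum>i\<in>(UNIV::'a::finite set). G i x)"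
  unfolding hp_def by (rule lin_sum) auto

lemma i_alpha_eq: "i_alpha S = (\<lambda>z. (1/2) * ((\<Sum>i\<in>UNIV. pc (fst z) i * pd (d_xiq i) S z
      - qc (fst z) i * pd (d_xip i) S z) - pd d_xit S z))"
  by (rule ext) (simp add: i_alpha_def)

lemma Xop_eq: "Xop \<delta> k S = (\<lambda>z. (\<Sum>i\<in>UNIV. qc (snd z) i * pd (d_p i) S z - pc (snd z) i * pd (d_q i) S z)
             + tc (snd z) * (\<Sum>i\<in>UNIV. pc (fst z) i * pd (d_p i) S z + qc (fst z) i * pd (d_q i) S z)
             - (\<Sum>i\<in>UNIV. pc (fst z) i * pc (snd z) i + qc (fst z) i * qc (snd z) i) * pd d_t S z
             + (2 * real (CARD('n) + 1) * \<delta> + real k) * tc (snd z) * S z)"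
  for S :: "'n::finite sym"
  by (rule ext) (simp add: Xop_def Dop_def Es_def Es_xi_def)

lemmas smooth_rules = smooth_add smooth_diff smooth_mult smooth_const smooth_coord smooth_pd Basis_d

lemma smooth_sum_UNIV: "(\<And>j. smooth (F j)) \<Longrightarrow> smooth (\<lambda>z. \<Sum>j\<in>(UNIV::'a::finite set). F j z)"
  by (rule smooth_sum) auto

lemma smooth_i_alpha: "smooth S \<Longrightarrow> smooth (i_alpha S)"
  unfolding i_alpha_eq
  by (intro smooth_mult smooth_const smooth_diff smooth_sum_UNIV smooth_coord smooth_pd Basis_d)

lemma smooth_Xop: "smooth S \<Longrightarrow> smooth (Xop \<delta> k S)"
  unfolding Xop_eq
  by (intro smooth_add smooth_mult smooth_const smooth_diff smooth_sum_UNIV smooth_coord smooth_pd Basis_d)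

lemma hom_i_alpha:
  assumes "hom_poly_xi m S"
  shows "hom_poly_xi (m - 1) (i_alpha S)"
  unfolding hom_poly_iff
proof
  fix x
  have h: "hp m (\<lambda>\<xi>. S (x, \<xi>))" using assms hom_poly_iff by blast
  have e: "(\<lambda>\<xi>. i_alpha S (x, \<xi>)) = (\<lambda>\<xi>. (1/2) * ((\<Sum>i\<in>UNIV. pc x i * pd (eqd i) (\<lambda>\<eta>. S (x, \<eta>)) \<xi>
      - qc x i * pd (epd i) (\<lambda>\<eta>. S (x, \<eta>)) \<xi>) - pd etd (\<lambda>\<eta>. S (x, \<eta>)) \<xi>))"
    by (rule ext) (simp add: i_alpha_def d_eqs pd_slice_xi)
  show "hp (m - 1) (\<lambda>\<xi>. i_alpha S (x, \<xi>))"
    unfolding e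
    using hp_pd_q[OF h] hp_pd_p[OF h] hp_pd_t[OF h]
    by (intro hp_scale hp_diff hp_sum) auto
qed

lemma hom_Xop:
  fixes S :: "'n::finite sym"
  assumes sm: "smooth S" and hS: "hom_poly_xi m S"
  shows "hom_poly_xi (Suc m) (Xop \<delta> k S)"
  unfolding hom_poly_iff
proof
  fix x
  have h: "hp m (\<lambda>\<xi>. S (x, \<xi>))" using hS hom_poly_iff by blast
  have A: "hp m (\<lambda>\<xi>. pd (d_p i) S (x, \<xi>))" "hp m (\<lambda>\<xi>. pd (d_q i) S (x, \<xi>))"
    "hp m (\<lambda>\<xi>. pd d_t S (x, \<xi>))" for i
    unfolding d_eqs by (rule x_deriv_hp_S[OF sm hS Basis_pt(2)], rule x_deriv_hp_S[OF sm hS Basis_pt(1)],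
      rule x_deriv_hp_S[OF sm hS Basis_pt(3)])
  let ?c = "2 * real (CARD('n) + 1) * \<delta> + real k"
  have e: "(\<lambda>\<xi>. Xop \<delta> k S (x, \<xi>)) = (\<lambda>\<xi>. (\<Sum>i\<in>UNIV. qc \<xi> i * pd (d_p i) S (x, \<xi>) - pc \<xi> i * pd (d_q i) S (x, \<xi>))
             + tc \<xi> * (\<Sum>i\<in>UNIV. pc x i * pd (d_p i) S (x, \<xi>) + qc x i * pd (d_q i) S (x, \<xi>))
             - (\<Sum>i\<in>UNIV. pc x i * (pc \<xi> i * pd d_t S (x, \<xi>)) + qc x i * (qc \<xi> i * pd d_t S (x, \<xi>)))
             + ?c * (tc \<xi> * S (x, \<xi>)))"
    by (rule ext) (simp add: Xop_eq sum_distrib_left algebra_simps)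
  have t1: "hp (Suc m) (\<lambda>\<xi>. \<Sum>i\<in>UNIV. qc \<xi> i * pd (d_p i) S (x, \<xi>) - pc \<xi> i * pd (d_q i) S (x, \<xi>))"
    using A by (intro hp_sum hp_diff hp_mult_q hp_mult_p)
  have t2: "hp (Suc m) (\<lambda>\<xi>. tc \<xi> * (\<Sum>i\<in>UNIV. pc x i * pd (d_p i) S (x, \<xi>) + qc x i * pd (d_q i) S (x, \<xi>)))"
    using A by (intro hp_mult_t hp_sum hp_add hp_scale)
  have t3: "hp (Suc m) (\<lambda>\<xi>. \<Sum>i\<in>UNIV. pc x i * (pc \<xi> i * pd d_t S (x, \<xi>)) + qc x i * (qc \<xi> i * pd d_t S (x, \<xi>)))"
    using A by (intro hp_sum hp_add hp_scale hp_mult_p hp_mult_q)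
  have t4: "hp (Suc m) (\<lambda>\<xi>. ?c * (tc \<xi> * S (x, \<xi>)))"
    using h by (intro hp_scale hp_mult_t)
  show "hp (Suc m) (\<lambda>\<xi>. Xop \<delta> k S (x, \<xi>))"
    unfolding e by (intro hp_add hp_diff t1 t2 t3 t4)
qed



definition Iop :: "'n::finite \<Rightarrow> 'n sym \<Rightarrow> 'n sym" where
  "Iop i S = (\<lambda>z. pc (fst z) i * pd (d_xiq i) S z - qc (fst z) i * pd (d_xip i) S z)"

definition Gop :: "'n::finite \<Rightarrow> 'n sym \<Rightarrow> 'n sym" where
  "Gop j S = (\<lambda>z. qc (snd z) j * pd (d_p j) S z - pc (snd z) j * pd (d_q j) S z
      + tc (snd z) * (pc (fst z) j * pd (d_p j) S z + qc (fst z) j * pd (d_q j) S z)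
      - (pc (fst z) j * pc (snd z) j + qc (fst z) j * qc (snd z) j) * pd d_t S z)"

lemma smooth_Iop: "smooth S \<Longrightarrow> smooth (Iop i S)"
  unfolding Iop_def by (intro smooth_rules)
lemma smooth_Gop: "smooth S \<Longrightarrow> smooth (Gop j S)"
  unfolding Gop_def by (intro smooth_rules)

lemma dfa_smooth_simp: "smooth f \<Longrightarrow> v \<in> Basis \<Longrightarrow> dfa v f z = True"
  using smooth_dfa by blast

lemma xidirs: "xidir (eqd i)" "xidir (epd i)" "xidir etd" using xidir by auto

lemma clair:
  assumes "smooth S" "hom_poly_xi m S"
  shows "pd (d_xiq i) (pd (d_q j) S) z = pd (d_q j) (pd (d_xiq i) S) z"
    "pd (d_xiq i) (pd (d_p j) S) z = pd (d_p j) (pd (d_xiq i) S) z"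
    "pd (d_xiq i) (pd d_t S) z = pd d_t (pd (d_xiq i) S) z"
    "pd (d_xip i) (pd (d_q j) S) z = pd (d_q j) (pd (d_xip i) S) z"
    "pd (d_xip i) (pd (d_p j) S) z = pd (d_p j) (pd (d_xip i) S) z"
    "pd (d_xip i) (pd d_t S) z = pd d_t (pd (d_xip i) S) z"
    "pd d_xit (pd (d_q j) S) z = pd (d_q j) (pd d_xit S) z"
    "pd d_xit (pd (d_p j) S) z = pd (d_p j) (pd d_xit S) z"
    "pd d_xit (pd d_t S) z = pd d_t (pd d_xit S) z"
  unfolding d_eqs using clairaut_S[OF assms Basis_pt(1)] clairaut_S[OF assms Basis_pt(2)]
    clairaut_S[OF assms Basis_pt(3)] xidirs by blast+

lemma comm_IG:
  assumes sm: "smooth S" and hS: "hom_poly_xi m S"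
  shows "Iop i (Gop j S) z - Gop j (Iop i S) z =
    (if i = j then pc (fst z) i * pd (d_p i) S z + qc (fst z) i * pd (d_q i) S z
       - qc (snd z) i * pd (d_xiq i) S z - pc (snd z) i * pd (d_xip i) S z - tc (snd z) * Iop i S z else 0)"
  unfolding Iop_def Gop_def
  using sm
  apply (simp add: pd_add pd_diff pd_mult pd_const pd_coord dfa_smooth_simp smooth_rules clair[OF sm hS])
  apply (auto simp: algebra_simps)
  done


lemma comm_tG:
  assumes sm: "smooth S" and hS: "hom_poly_xi m S"
  shows "pd d_xit (Gop j S) z - Gop j (pd d_xit S) z = pc (fst z) j * pd (d_p j) S z + qc (fst z) j * pd (d_q j) S z"
  unfolding Gop_def
  using sm
  by (simp add: pd_add pd_diff pd_mult pd_const pd_coord dfa_smooth_simp smooth_rules clair[OF sm hS])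

lemma Iop_T: "smooth S \<Longrightarrow> Iop i (\<lambda>z. tc (snd z) * S z) z = tc (snd z) * Iop i S z"
  unfolding Iop_def by (simp add: pd_mult pd_coord dfa_smooth_simp smooth_rules algebra_simps)

lemma xit_T: "smooth S \<Longrightarrow> pd d_xit (\<lambda>z. tc (snd z) * S z) z = S z + tc (snd z) * pd d_xit S z"
  by (simp add: pd_mult pd_coord dfa_smooth_simp smooth_rules algebra_simps)

lemma Xop_G: "Xop \<delta> k S = (\<lambda>z. (\<Sum>j\<in>UNIV. Gop j S z) + (2 * real (CARD('n) + 1) * \<delta> + real k) * (tc (snd z) * S z))"
  for S :: "'n::finite sym"
  unfolding Xop_eq Gop_def by (rule ext) (simp add: sum.distrib sum_subtractf sum_distrib_left sum_distrib_right algebra_simps)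

lemma i_alpha_I: "i_alpha S = (\<lambda>z. (1/2) * ((\<Sum>i\<in>UNIV. Iop i S z) - pd d_xit S z))"
  unfolding i_alpha_eq Iop_def by (rule refl)

lemma Iop_lin:
  fixes S :: "'n::finite sym"
  assumes sm: "smooth S"
  shows "Iop i (Xop \<delta> k S) z = (\<Sum>j\<in>UNIV. Iop i (Gop j S) z) + (2 * real (CARD('n) + 1) * \<delta> + real k) * (tc (snd z) * Iop i S z)"
proof -
  have "Iop i (Xop \<delta> k S) z = (\<Sum>j\<in>UNIV. Iop i (Gop j S) z) + (2 * real (CARD('n) + 1) * \<delta> + real k) * Iop i (\<lambda>z. tc (snd z) * S z) z"
    unfolding Xop_G Iop_def using sm
    by (simp add: pd_add pd_sum pd_mult pd_const dfa_smooth_simp smooth_rules smooth_Gop smooth_sum_UNIV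
        sum_distrib_left sum_subtractf algebra_simps)
  then show ?thesis using Iop_T[OF sm] by simp
qed

lemma xit_lin:
  fixes S :: "'n::finite sym"
  assumes sm: "smooth S"
  shows "pd d_xit (Xop \<delta> k S) z = (\<Sum>j\<in>UNIV. pd d_xit (Gop j S) z) + (2 * real (CARD('n) + 1) * \<delta> + real k) * (S z + tc (snd z) * pd d_xit S z)"
proof -
  have "pd d_xit (Xop \<delta> k S) z = (\<Sum>j\<in>UNIV. pd d_xit (Gop j S) z) + (2 * real (CARD('n) + 1) * \<delta> + real k) * pd d_xit (\<lambda>z. tc (snd z) * S z) z"
    unfolding Xop_G using sm
    by (simp add: pd_add pd_sum pd_mult pd_const dfa_smooth_simp smooth_rules smooth_Gop smooth_sum_UNIV)
  then show ?thesis using xit_T[OF sm] by simp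
qed

lemma Gop_lin:
  fixes S :: "'n::finite sym"
  assumes sm: "smooth S"
  shows "Gop j (i_alpha S) z = (1/2) * ((\<Sum>i\<in>UNIV. Gop j (Iop i S) z) - Gop j (pd d_xit S) z)"
  unfolding i_alpha_I Gop_def using sm
  apply (simp only: pd_add pd_diff pd_sum pd_mult pd_const dfa_smooth_simp smooth_rules smooth_Iop smooth_sum_UNIV
     dfa_add dfa_diff dfa_mult dfa_const finite_UNIV simp_thms)
  apply (simp add: pd_sum dfa_smooth_simp smooth_Iop sum_distrib_left sum_subtractf sum.distrib algebra_simps)
  done


lemma comm:
  fixes S :: "'n::finite sym"
  assumes sm: "smooth S" and hS: "hom_poly_xi m S"
  shows "i_alpha (Xop \<delta> m S) z = Xop \<delta> (m - 1) (i_alpha S) z - (real m + real CARD('n) * \<delta> + \<delta>) * S z"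
proof -
  define c where "c = 2 * real (CARD('n) + 1) * \<delta> + real m"
  define c' where "c' = 2 * real (CARD('n) + 1) * \<delta> + real (m - 1)"
  define A where "A i j = Gop j (Iop i S) z" for i j
  define B where "B j = Gop j (pd d_xit S) z" for j
  define Ii where "Ii i = Iop i S z" for i
  define St where "St = pd d_xit S z"
  define E where "E j = pc (fst z) j * pd (d_p j) S z + qc (fst z) j * pd (d_q j) S z" for j
  define Q where "Q i = qc (snd z) i * pd (d_xiq i) S z + pc (snd z) i * pd (d_xip i) S z" for i
  define \<tau> where "\<tau> = tc (snd z)"
  define iS where "iS = i_alpha S z"
  have IG: "Iop i (Gop j S) z = A i j + (if i = j then E i - Q i - \<tau> * Ii i else 0)" for i j
    using comm_IG[OF sm hS, of i j z] by (auto simp: A_def E_def Q_def \<tau>_def Ii_def)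
  have tG: "pd d_xit (Gop j S) z = B j + E j" for j
    using comm_tG[OF sm hS, of j z] by (simp add: B_def E_def)
  have eul: "(\<Sum>i\<in>UNIV. Q i) + \<tau> * St = real m * S z"
    using euler_S[OF hS, of z] by (simp add: Q_def \<tau>_def St_def)
  have iS: "iS = (1/2) * ((\<Sum>i\<in>UNIV. Ii i) - St)"
    by (simp add: iS_def i_alpha_I Ii_def St_def)
  have ciS: "c * (\<tau> * iS) - c' * (\<tau> * iS) = \<tau> * iS"
  proof (cases m)
    case 0
    have "iS = 0" unfolding iS_def i_alpha_def using xi_deriv_zero[OF hS[unfolded 0]] by simp
    then show ?thesis by simp
  next
    case (Suc k)
    then show ?thesis by (simp add: c_def c'_def algebra_simps)
  qed
  have L: "i_alpha (Xop \<delta> m S) z = (1/2) * ((\<Sum>i\<in>UNIV. (\<Sum>j\<in>UNIV. A i j + (if i = j then E i - Q i - \<tau> * Ii i else 0))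
       + c * (\<tau> * Ii i)) - ((\<Sum>j\<in>UNIV. B j + E j) + c * (S z + \<tau> * St)))"
    unfolding i_alpha_I Iop_lin[OF sm] xit_lin[OF sm] IG tG
    by (simp add: c_def \<tau>_def Ii_def St_def)
  have R: "Xop \<delta> (m - 1) (i_alpha S) z = (\<Sum>j\<in>UNIV. (1/2) * ((\<Sum>i\<in>UNIV. A i j) - B j)) + c' * (\<tau> * iS)"
    unfolding Xop_G Gop_lin[OF sm] by (simp add: A_def B_def c'_def \<tau>_def iS_def)
  have s1: "(\<Sum>j\<in>UNIV. A i j + (if i = j then E i - Q i - \<tau> * Ii i else 0)) = (\<Sum>j\<in>UNIV. A i j) + (E i - Q i - \<tau> * Ii i)" for i
    by (simp add: sum.distrib)
  have sw: "(\<Sum>i\<in>UNIV. \<Sum>j\<in>UNIV. A i j) = (\<Sum>j\<in>UNIV. \<Sum>i\<in>UNIV. A i j)" by (rule sum.swap)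
  have L2: "i_alpha (Xop \<delta> m S) z = (1/2) * ((\<Sum>j\<in>UNIV. \<Sum>i\<in>UNIV. A i j) + (\<Sum>i\<in>UNIV. E i) - (\<Sum>i\<in>UNIV. Q i)
      - \<tau> * (\<Sum>i\<in>UNIV. Ii i) + c * (\<tau> * (\<Sum>i\<in>UNIV. Ii i)) - (\<Sum>j\<in>UNIV. B j) - (\<Sum>j\<in>UNIV. E j) - c * S z - c * (\<tau> * St))"
    unfolding L s1 sw[symmetric]
    by (simp add: sum.distrib sum_subtractf sum_distrib_left algebra_simps)
  have R2: "Xop \<delta> (m - 1) (i_alpha S) z = (1/2) * ((\<Sum>j\<in>UNIV. \<Sum>i\<in>UNIV. A i j) - (\<Sum>j\<in>UNIV. B j)) + c' * (\<tau> * iS)"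
    unfolding R by (simp only: sum_distrib_left[symmetric] sum_subtractf)
  have SI: "(\<Sum>i\<in>UNIV. Ii i) = 2 * iS + St" using iS by simp
  have SQ: "(\<Sum>i\<in>UNIV. Q i) = real m * S z - \<tau> * St" using eul by simp
  show ?thesis
    unfolding L2 R2 SI SQ
    using ciS by (simp add: c_def algebra_simps)
qed


lemma Rsp_i_alpha: "S \<in> Rsp \<delta> m \<Longrightarrow> i_alpha S \<in> Rsp \<delta> (m - 1)"
  unfolding Rsp_iff using smooth_i_alpha hom_i_alpha by blast

lemma Rsp_Xop: "S \<in> Rsp \<delta> m \<Longrightarrow> Xop \<delta> m S \<in> Rsp \<delta> (Suc m)"
  unfolding Rsp_iff using smooth_Xop hom_Xop by blast

lemma i_alpha_lin:
  assumes "smooth f" "smooth g"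
  shows "i_alpha (\<lambda>z. f z - c * g z) = (\<lambda>z. i_alpha f z - c * i_alpha g z)"
proof (rule ext)
  fix z
  have I: "Iop i (\<lambda>z. f z - c * g z) z = Iop i f z - c * Iop i g z" for i
    unfolding Iop_def using assms
    by (simp add: pd_diff pd_mult pd_const dfa_smooth_simp smooth_rules algebra_simps)
  have t: "pd d_xit (\<lambda>z. f z - c * g z) z = pd d_xit f z - c * pd d_xit g z"
    using assms by (simp add: pd_diff pd_mult pd_const dfa_smooth_simp smooth_rules)
  show "i_alpha (\<lambda>z. f z - c * g z) z = i_alpha f z - c * i_alpha g z"
    unfolding i_alpha_I I t by (simp add: sum_subtractf sum_distrib_left algebra_simps)
qed

lemma smooth_funpow: "smooth f \<Longrightarrow> smooth ((i_alpha ^^ l) f)"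
  by (induction l) (auto simp: smooth_i_alpha)

lemma funpow_lin:
  assumes "smooth f" "smooth g"
  shows "(i_alpha ^^ l) (\<lambda>z. f z - c * g z) = (\<lambda>z. (i_alpha ^^ l) f z - c * (i_alpha ^^ l) g z)"
proof (induction l)
  case 0
  then show ?case by simp
next
  case (Suc l)
  then show ?case using i_alpha_lin[OF smooth_funpow[OF assms(1)] smooth_funpow[OF assms(2)]] by simp
qed

lemma i_alpha_zero: "i_alpha (\<lambda>z. 0) = (\<lambda>z. 0)"
  unfolding i_alpha_def by (simp add: pd_const)
lemma Xop_zero: "Xop \<delta> k (\<lambda>z. 0) = (\<lambda>z. 0)"
  unfolding Xop_def Dop_def Es_def by (simp add: pd_const)

lemma main_ind:
  fixes S :: "'n::finite sym"
  shows "S \<in> Rsp \<delta> m \<Longrightarrow> (i_alpha ^^ l) S = (\<lambda>_. 0) \<Longrightarrow> (i_alpha ^^ Suc l) (Xop \<delta> m S) = (\<lambda>_. 0)"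
proof (induction l arbitrary: m S)
  case 0
  then show ?case by (simp add: Xop_zero i_alpha_zero)
next
  case (Suc l)
  have sm: "smooth S" and hS: "hom_poly_xi m S" using Suc.prems(1) Rsp_iff by blast+
  have c: "i_alpha (Xop \<delta> m S) = (\<lambda>z. Xop \<delta> (m - 1) (i_alpha S) z - (real m + real CARD('n) * \<delta> + \<delta>) * S z)"
    by (rule ext) (rule comm[OF sm hS])
  have iS: "i_alpha S \<in> Rsp \<delta> (m - 1)" by (rule Rsp_i_alpha[OF Suc.prems(1)])
  have "(i_alpha ^^ l) (i_alpha S) = (i_alpha ^^ Suc l) S" by (simp add: funpow_Suc_right del: funpow.simps)
  then have z1: "(i_alpha ^^ Suc l) (Xop \<delta> (m - 1) (i_alpha S)) = (\<lambda>_. 0)"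
    using Suc.IH[OF iS] Suc.prems(2) by simp
  have smX: "smooth (Xop \<delta> (m - 1) (i_alpha S))" using smooth_Xop smooth_i_alpha sm by blast
  have "(i_alpha ^^ Suc (Suc l)) (Xop \<delta> m S) = (i_alpha ^^ Suc l) (i_alpha (Xop \<delta> m S))"
    by (simp only: funpow_Suc_right comp_def)
  also have "\<dots> = (\<lambda>z. (i_alpha ^^ Suc l) (Xop \<delta> (m - 1) (i_alpha S)) z
      - (real m + real CARD('n) * \<delta> + \<delta>) * (i_alpha ^^ Suc l) S z)"
    unfolding c by (rule funpow_lin[OF smX sm])
  also have "\<dots> = (\<lambda>_. 0)" using z1 Suc.prems(2) by simp
  finally show ?case .
qed

theorem proposition6p1:
  fixes \<delta> :: real and k l :: nat
  assumes "1 \<le> k" and "1 \<le> l" and "l \<le> k + 1"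
  shows "i_alpha ` (Fsp \<delta> k l :: ('n::finite) sym set) \<subseteq> Fsp \<delta> (k - 1) (l - 1)
     \<and> Xop \<delta> (k - 1) ` (Fsp \<delta> (k - 1) (l - 1) :: ('n::finite) sym set) \<subseteq> Fsp \<delta> k l"
proof
  obtain l' where l': "l = Suc l'" using assms(2) by (cases l) auto
  show "i_alpha ` (Fsp \<delta> k l :: ('n::finite) sym set) \<subseteq> Fsp \<delta> (k - 1) (l - 1)"
  proof
    fix T assume "T \<in> i_alpha ` (Fsp \<delta> k l :: 'n sym set)"
    then obtain S :: "'n sym" where S: "S \<in> Rsp \<delta> k" "(i_alpha ^^ l) S = (\<lambda>_. 0)" and T: "T = i_alpha S"
      unfolding Fsp_def by blast
    have "(i_alpha ^^ (l - 1)) (i_alpha S) = (i_alpha ^^ l) S"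
      unfolding l' by (simp add: funpow_Suc_right del: funpow.simps)
    then show "T \<in> Fsp \<delta> (k - 1) (l - 1)"
      unfolding Fsp_def T using Rsp_i_alpha[OF S(1)] S(2) by simp
  qed
  show "Xop \<delta> (k - 1) ` (Fsp \<delta> (k - 1) (l - 1) :: ('n::finite) sym set) \<subseteq> Fsp \<delta> k l"
  proof
    fix T assume "T \<in> Xop \<delta> (k - 1) ` (Fsp \<delta> (k - 1) (l - 1) :: 'n sym set)"
    then obtain S :: "'n sym" where S: "S \<in> Rsp \<delta> (k - 1)" "(i_alpha ^^ l') S = (\<lambda>_. 0)"
      and T: "T = Xop \<delta> (k - 1) S"
      unfolding Fsp_def l' by auto
    have "T \<in> Rsp \<delta> k" using Rsp_Xop[OF S(1)] assms(1) T by simp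
    moreover have "(i_alpha ^^ l) T = (\<lambda>_. 0)" unfolding T l' by (rule main_ind[OF S])
    ultimately show "T \<in> Fsp \<delta> k l" unfolding Fsp_def by simp
  qed
qed


end
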